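(* Let $E$ be a finite directed graph and let $R$ be a left (respectively right) noetherian ring. If $E$ satisfies Condition (NE), then $(L_R(E))_0$ is left (respectively right) noetherian as a ring.
   Context: A directed graph $E=(E^0,E^1,s,r)$ has vertex set $E^0$, edge set $E^1$, source and range maps $s,r$; finite means $E^0,E^1$ finite. A path is a sequence of edges $f_1\cdots f_n$ with $s(f_{i+1})=r(f_i)$, of length $n$; a cycle is a path with $s(f_1)=r(f_n)$ and $s(f_i)\neq s(f_1)$ for $2\le i\le n$; it has an exit if some edge $f$ satisfies $s(f)=s(f_i)$ for some $i$ with $f\neq f_i$. Condition (NE): no cycle has an exit. $L_R(E)$ is the $R$-algebra generated by $v\in E^0$, $f,f^*$ ($f\in E^1$), with $R$ commuting with generators, subject to $v_iv_j=\delta_{i,j}v_i$; $s(f)f=fr(f)=f$, $r(f)f^*=f^*s(f)=f^*$; $f^*f'=\delta_{f,f'}r(f)$; and $\sum_{s(f)=v}ff^*=v$ whenever $s^{-1}(v)$ is nonempty and finite. With $\alpha^*=f_n^*\cdots f_1^*$, every element is a finite sum $\sum r_i\alpha_i\beta_i^*$ ($r_i\in R$, $\alpha_i,\beta_i$ paths, vertices as length-0 paths); $(L_R(E))_0$ is the subring of such sums with $\mathrm{len}(\alpha_i)=\mathrm{len}(\beta_i)$ for all $i$. *)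

theory Defs
  imports "HOL-Algebra.QuotRing"
begin

definition finite_graph :: "'v set \<Rightarrow> 'e set \<Rightarrow> ('e \<Rightarrow> 'v) \<Rightarrow> ('e \<Rightarrow> 'v) \<Rightarrow> bool" where
  "finite_graph E0 E1 s r \<longleftrightarrow> finite E0 \<and> finite E1 \<and> s ` E1 \<subseteq> E0 \<and> r ` E1 \<subseteq> E0"

definition edge_path :: "'e set \<Rightarrow> ('e \<Rightarrow> 'v) \<Rightarrow> ('e \<Rightarrow> 'v) \<Rightarrow> 'e list \<Rightarrow> bool" where
  "edge_path E1 s r es \<longleftrightarrow> es \<noteq> [] \<and> set es \<subseteq> E1 \<and>
     (\<forall>i. Suc i < length es \<longrightarrow> s (es ! Suc i) = r (es ! i))"

definition is_cycle :: "'e set \<Rightarrow> ('e \<Rightarrow> 'v) \<Rightarrow> ('e \<Rightarrow> 'v) \<Rightarrow> 'e list \<Rightarrow> bool" where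
  "is_cycle E1 s r es \<longleftrightarrow> edge_path E1 s r es \<and> s (hd es) = r (last es) \<and>
     (\<forall>i. 1 \<le> i \<and> i < length es \<longrightarrow> s (es ! i) \<noteq> s (hd es))"

definition has_exit :: "'e set \<Rightarrow> ('e \<Rightarrow> 'v) \<Rightarrow> 'e list \<Rightarrow> bool" where
  "has_exit E1 s es \<longleftrightarrow> (\<exists>f\<in>E1. \<exists>i<length es. s f = s (es ! i) \<and> f \<noteq> es ! i)"

definition condition_NE :: "'e set \<Rightarrow> ('e \<Rightarrow> 'v) \<Rightarrow> ('e \<Rightarrow> 'v) \<Rightarrow> bool" where
  "condition_NE E1 s r \<longleftrightarrow> (\<forall>c. is_cycle E1 s r c \<longrightarrow> \<not> has_exit E1 s c)"

text \<open>Paths including length-0 paths (vertices): a pair (v, es) with v the source vertex.\<close>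
definition gpath :: "'v set \<Rightarrow> 'e set \<Rightarrow> ('e \<Rightarrow> 'v) \<Rightarrow> ('e \<Rightarrow> 'v) \<Rightarrow> 'v \<times> 'e list \<Rightarrow> bool" where
  "gpath E0 E1 s r p \<longleftrightarrow> (case p of (v, es) \<Rightarrow>
      v \<in> E0 \<and> (es = [] \<or> (edge_path E1 s r es \<and> v = s (hd es))))"

definition left_ideal :: "'a set \<Rightarrow> ('a, 'b) ring_scheme \<Rightarrow> bool" where
  "left_ideal I S \<longleftrightarrow> additive_subgroup I S \<and> (\<forall>a\<in>carrier S. \<forall>x\<in>I. a \<otimes>\<^bsub>S\<^esub> x \<in> I)"

definition right_ideal :: "'a set \<Rightarrow> ('a, 'b) ring_scheme \<Rightarrow> bool" where
  "right_ideal I S \<longleftrightarrow> additive_subgroup I S \<and> (\<forall>a\<in>carrier S. \<forall>x\<in>I. x \<otimes>\<^bsub>S\<^esub> a \<in> I)"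

definition left_noetherian :: "('a, 'b) ring_scheme \<Rightarrow> bool" where
  "left_noetherian S \<longleftrightarrow> ring S \<and>
     (\<forall>C :: nat \<Rightarrow> 'a set. (\<forall>n. left_ideal (C n) S) \<and> (\<forall>n. C n \<subseteq> C (Suc n))
         \<longrightarrow> (\<exists>N. \<forall>n\<ge>N. C n = C N))"

definition right_noetherian :: "('a, 'b) ring_scheme \<Rightarrow> bool" where
  "right_noetherian S \<longleftrightarrow> ring S \<and>
     (\<forall>C :: nat \<Rightarrow> 'a set. (\<forall>n. right_ideal (C n) S) \<and> (\<forall>n. C n \<subseteq> C (Suc n))
         \<longrightarrow> (\<exists>N. \<forall>n\<ge>N. C n = C N))"

datatype ('v, 'e) lgen = Vx 'v | Ed 'e | Gh 'e

text \<open>Finitely supported R-valued functions on words in the generators (the free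
  unital R-algebra with central coefficients), with convolution product.\<close>
definition free_alg :: "('r, 'm) ring_scheme \<Rightarrow> (('v, 'e) lgen list \<Rightarrow> 'r) ring" where
  "free_alg R = \<lparr> carrier = {f. (\<forall>w. f w \<in> carrier R) \<and> finite {w. f w \<noteq> \<zero>\<^bsub>R\<^esub>}},
      mult = (\<lambda>f g w. \<Oplus>\<^bsub>R\<^esub> i\<in>{..length w}. f (take i w) \<otimes>\<^bsub>R\<^esub> g (drop i w)),
      one = (\<lambda>w. if w = [] then \<one>\<^bsub>R\<^esub> else \<zero>\<^bsub>R\<^esub>),
      zero = (\<lambda>w. \<zero>\<^bsub>R\<^esub>),
      add = (\<lambda>f g w. f w \<oplus>\<^bsub>R\<^esub> g w) \<rparr>"

definition mon :: "('r, 'm) ring_scheme \<Rightarrow> ('v, 'e) lgen list \<Rightarrow> (('v, 'e) lgen list \<Rightarrow> 'r)" where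
  "mon R w = (\<lambda>u. if u = w then \<one>\<^bsub>R\<^esub> else \<zero>\<^bsub>R\<^esub>)"

text \<open>Since E is finite, L_R(E) is unital with
  identity the sum of the vertices; we work in the unital free algebra and add the
  relation 1 = sum of vertices, which yields the same ring.\<close>
definition lpa_rels :: "('r, 'm) ring_scheme \<Rightarrow> 'v set \<Rightarrow> 'e set \<Rightarrow> ('e \<Rightarrow> 'v) \<Rightarrow> ('e \<Rightarrow> 'v)
    \<Rightarrow> (('v, 'e) lgen list \<Rightarrow> 'r) set" where
  "lpa_rels R E0 E1 s r = (let A = free_alg R in
      {mon R [Vx u, Vx w] \<ominus>\<^bsub>A\<^esub> (if u = w then mon R [Vx u] else \<zero>\<^bsub>A\<^esub>) | u w. u \<in> E0 \<and> w \<in> E0}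
    \<union> {mon R [Vx (s f), Ed f] \<ominus>\<^bsub>A\<^esub> mon R [Ed f] | f. f \<in> E1}
    \<union> {mon R [Ed f, Vx (r f)] \<ominus>\<^bsub>A\<^esub> mon R [Ed f] | f. f \<in> E1}
    \<union> {mon R [Vx (r f), Gh f] \<ominus>\<^bsub>A\<^esub> mon R [Gh f] | f. f \<in> E1}
    \<union> {mon R [Gh f, Vx (s f)] \<ominus>\<^bsub>A\<^esub> mon R [Gh f] | f. f \<in> E1}
    \<union> {mon R [Gh f, Ed g] \<ominus>\<^bsub>A\<^esub> (if f = g then mon R [Vx (r f)] else \<zero>\<^bsub>A\<^esub>) | f g. f \<in> E1 \<and> g \<in> E1}
    \<union> {(\<Oplus>\<^bsub>A\<^esub> f\<in>{f \<in> E1. s f = v}. mon R [Ed f, Gh f]) \<ominus>\<^bsub>A\<^esub> mon R [Vx v]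
         | v. v \<in> E0 \<and> {f \<in> E1. s f = v} \<noteq> {} \<and> finite {f \<in> E1. s f = v}}
    \<union> {\<one>\<^bsub>A\<^esub> \<ominus>\<^bsub>A\<^esub> (\<Oplus>\<^bsub>A\<^esub> v\<in>E0. mon R [Vx v])})"

definition lpa_ideal where
  "lpa_ideal R E0 E1 s r = genideal (free_alg R) (lpa_rels R E0 E1 s r)"

definition LPA :: "('r, 'm) ring_scheme \<Rightarrow> 'v set \<Rightarrow> 'e set \<Rightarrow> ('e \<Rightarrow> 'v) \<Rightarrow> ('e \<Rightarrow> 'v)
    \<Rightarrow> (('v, 'e) lgen list \<Rightarrow> 'r) set ring" where
  "LPA R E0 E1 s r = free_alg R Quot lpa_ideal R E0 E1 s r"

definition path_word :: "'v \<times> 'e list \<Rightarrow> ('v, 'e) lgen list" where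
  "path_word p = (case p of (v, es) \<Rightarrow> if es = [] then [Vx v] else map Ed es)"

definition ghost_word :: "'v \<times> 'e list \<Rightarrow> ('v, 'e) lgen list" where
  "ghost_word p = (case p of (v, es) \<Rightarrow> if es = [] then [Vx v] else map Gh (rev es))"

text \<open>(L_R(E))_0: the classes of finite sums of r alpha beta* with len alpha = len beta.\<close>
definition LPA0_carrier :: "('r, 'm) ring_scheme \<Rightarrow> 'v set \<Rightarrow> 'e set \<Rightarrow> ('e \<Rightarrow> 'v) \<Rightarrow> ('e \<Rightarrow> 'v)
    \<Rightarrow> (('v, 'e) lgen list \<Rightarrow> 'r) set set" where
  "LPA0_carrier R E0 E1 s r =
     {lpa_ideal R E0 E1 s r +>\<^bsub>free_alg R\<^esub> x | x. x \<in> carrier (free_alg R) \<and>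
        (\<forall>w. x w \<noteq> \<zero>\<^bsub>R\<^esub> \<longrightarrow> (\<exists>\<alpha> \<beta>. gpath E0 E1 s r \<alpha> \<and> gpath E0 E1 s r \<beta> \<and>
             length (snd \<alpha>) = length (snd \<beta>) \<and> w = path_word \<alpha> @ ghost_word \<beta>))}"

definition LPA0 :: "('r, 'm) ring_scheme \<Rightarrow> 'v set \<Rightarrow> 'e set \<Rightarrow> ('e \<Rightarrow> 'v) \<Rightarrow> ('e \<Rightarrow> 'v)
    \<Rightarrow> (('v, 'e) lgen list \<Rightarrow> 'r) set ring" where
  "LPA0 R E0 E1 s r = (LPA R E0 E1 s r)\<lparr>carrier := LPA0_carrier R E0 E1 s r\<rparr>"

end

theory Submission
  imports Defs "HOL-Algebra.Subrings"
begin


lemma free_alg_simps: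
  "carrier (free_alg R) = {f. (\<forall>w. f w \<in> carrier R) \<and> finite {w. f w \<noteq> \<zero>\<^bsub>R\<^esub>}}"
  "mult (free_alg R) = (\<lambda>f g w. \<Oplus>\<^bsub>R\<^esub> i\<in>{..length w}. f (take i w) \<otimes>\<^bsub>R\<^esub> g (drop i w))"
  "one (free_alg R) = (\<lambda>w. if w = [] then \<one>\<^bsub>R\<^esub> else \<zero>\<^bsub>R\<^esub>)"
  "zero (free_alg R) = (\<lambda>w. \<zero>\<^bsub>R\<^esub>)"
  "add (free_alg R) = (\<lambda>f g w. f w \<oplus>\<^bsub>R\<^esub> g w)"
  by (simp_all add: free_alg_def)

context abelian_monoid
begin

lemma finsum_single:
  assumes "i \<in> A" "finite A" "\<And>j. j \<in> A \<Longrightarrow> j \<noteq> i \<Longrightarrow> f j = \<zero>" "f \<in> A \<rightarrow> carrier G"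
  shows "finsum G f A = f i"
proof -
  have "finsum G f A = (\<Oplus>j\<in>A. if i = j then f j else \<zero>)"
    by (rule finsum_cong') (use assms in auto)
  also have "\<dots> = f i" by (rule finsum_singleton) (use assms in auto)
  finally show ?thesis .
qed

lemma finsum_allzero:
  assumes "\<And>j. j \<in> A \<Longrightarrow> f j = \<zero>"
  shows "finsum G f A = \<zero>"
proof -
  have "finsum G f A = (\<Oplus>j\<in>A. \<zero>)"
    by (rule finsum_cong') (use assms in auto)
  then show ?thesis by simp
qed

lemma swap_tri:
  assumes F: "\<And>i j. F i j \<in> carrier G"
  shows "(\<Oplus>i\<in>{..n::nat}. \<Oplus>j\<in>{..i}. F i j) = (\<Oplus>j\<in>{..n}. \<Oplus>i\<in>{j..n}. F i j)"
proof (induction n)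
  case 0
  then show ?case by (simp add: F)
next
  case (Suc n)
  have L: "(\<Oplus>i\<in>{..Suc n}. \<Oplus>j\<in>{..i}. F i j) = (\<Oplus>j\<in>{..Suc n}. F (Suc n) j) \<oplus> (\<Oplus>i\<in>{..n}. \<Oplus>j\<in>{..i}. F i j)"
    by (simp add: F Pi_def)
  have ins: "\<And>j. j \<le> Suc n \<Longrightarrow> {j..Suc n} = insert (Suc n) {j..n}" by auto
  have "(\<Oplus>j\<in>{..Suc n}. \<Oplus>i\<in>{j..Suc n}. F i j) = (\<Oplus>j\<in>{..Suc n}. F (Suc n) j \<oplus> (\<Oplus>i\<in>{j..n}. F i j))"
    by (rule finsum_cong) (auto simp: ins F Pi_def)
  also have "\<dots> = (\<Oplus>j\<in>{..Suc n}. F (Suc n) j) \<oplus> (\<Oplus>j\<in>{..Suc n}. \<Oplus>i\<in>{j..n}. F i j)"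
    by (rule finsum_addf) (auto simp: F Pi_def)
  also have "(\<Oplus>j\<in>{..Suc n}. \<Oplus>i\<in>{j..n}. F i j) = (\<Oplus>j\<in>{..n}. \<Oplus>i\<in>{j..n}. F i j)"
    by (simp add: F Pi_def)
  finally show ?case using L Suc by simp
qed

end

context ring
begin

abbreviation FA where "FA \<equiv> free_alg R"

lemma FA_carrierI: "(\<And>w. f w \<in> carrier R) \<Longrightarrow> finite {w. f w \<noteq> \<zero>} \<Longrightarrow> f \<in> carrier FA"
  by (simp add: free_alg_simps)

lemma FA_carrierD: "f \<in> carrier FA \<Longrightarrow> f w \<in> carrier R"
  by (simp add: free_alg_simps)

lemma FA_carrierD2: "f \<in> carrier FA \<Longrightarrow> finite {w. f w \<noteq> \<zero>}"
  by (simp add: free_alg_simps)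

lemma FA_mult: "(f \<otimes>\<^bsub>FA\<^esub> g) w = (\<Oplus> i\<in>{..length w}. f (take i w) \<otimes> g (drop i w))"
  by (simp add: free_alg_simps)

lemma FA_add: "(f \<oplus>\<^bsub>FA\<^esub> g) w = f w \<oplus> g w"
  by (simp add: free_alg_simps)

lemma FA_zero: "\<zero>\<^bsub>FA\<^esub> = (\<lambda>w. \<zero>)"
  by (simp add: free_alg_simps)

lemma FA_one: "\<one>\<^bsub>FA\<^esub> = (\<lambda>w. if w = [] then \<one> else \<zero>)"
  by (simp add: free_alg_simps)

lemma FA_mult_closed:
  assumes f: "f \<in> carrier FA" and g: "g \<in> carrier FA"
  shows "f \<otimes>\<^bsub>FA\<^esub> g \<in> carrier FA"
proof (rule FA_carrierI)
  fix w show "(f \<otimes>\<^bsub>FA\<^esub> g) w \<in> carrier R"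
    by (simp add: FA_mult Pi_def FA_carrierD[OF f] FA_carrierD[OF g])
next
  let ?Sf = "{w. f w \<noteq> \<zero>}" and ?Sg = "{w. g w \<noteq> \<zero>}"
  have "{w. (f \<otimes>\<^bsub>FA\<^esub> g) w \<noteq> \<zero>} \<subseteq> (\<lambda>(u,v). u @ v) ` (?Sf \<times> ?Sg)"
  proof
    fix w assume "w \<in> {w. (f \<otimes>\<^bsub>FA\<^esub> g) w \<noteq> \<zero>}"
    hence ne: "(\<Oplus> i\<in>{..length w}. f (take i w) \<otimes> g (drop i w)) \<noteq> \<zero>" by (simp add: FA_mult)
    have "\<exists>i\<in>{..length w}. f (take i w) \<otimes> g (drop i w) \<noteq> \<zero>"
    proof (rule ccontr)
      assume "\<not> ?thesis"
      hence "(\<Oplus> i\<in>{..length w}. f (take i w) \<otimes> g (drop i w)) = \<zero>"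
        by (intro finsum_allzero) auto
      with ne show False by simp
    qed
    then obtain i where "f (take i w) \<otimes> g (drop i w) \<noteq> \<zero>" by auto
    hence "f (take i w) \<noteq> \<zero>" "g (drop i w) \<noteq> \<zero>"
      using FA_carrierD[OF f] FA_carrierD[OF g] by auto
    then show "w \<in> (\<lambda>(u,v). u @ v) ` (?Sf \<times> ?Sg)"
      by (intro image_eqI[of _ _ "(take i w, drop i w)"]) auto
  qed
  moreover have "finite ((\<lambda>(u,v). u @ v) ` (?Sf \<times> ?Sg))"
    using FA_carrierD2[OF f] FA_carrierD2[OF g] by auto
  ultimately show "finite {w. (f \<otimes>\<^bsub>FA\<^esub> g) w \<noteq> \<zero>}" by (rule finite_subset)
qed

lemma FA_mult_assoc:
  fixes f g h :: "('v,'e) lgen list \<Rightarrow> 'a"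
  assumes f: "f \<in> carrier FA" and g: "g \<in> carrier FA" and h: "h \<in> carrier FA"
  shows "(f \<otimes>\<^bsub>FA\<^esub> g) \<otimes>\<^bsub>FA\<^esub> h = f \<otimes>\<^bsub>FA\<^esub> (g \<otimes>\<^bsub>FA\<^esub> h)"
proof
  fix w :: "('v,'e) lgen list"
  let ?n = "length w"
  note cf = FA_carrierD[OF f] and cg = FA_carrierD[OF g] and ch = FA_carrierD[OF h]
  define F where "F i j = f (take j w) \<otimes> g (take (i - j) (drop j w)) \<otimes> h (drop i w)" for i j
  have Fc: "\<And>i j. F i j \<in> carrier R" by (simp add: F_def cf cg ch)
  have "((f \<otimes>\<^bsub>FA\<^esub> g) \<otimes>\<^bsub>FA\<^esub> h) w = (\<Oplus>i\<in>{..?n}. (\<Oplus>j\<in>{..i}. f (take j w) \<otimes> g (take (i - j) (drop j w))) \<otimes> h (drop i w))"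
    unfolding FA_mult
  proof (rule finsum_cong')
    fix i assume i: "i \<in> {..?n}"
    have "(\<Oplus>j\<in>{..length (take i w)}. f (take j (take i w)) \<otimes> g (drop j (take i w)))
        = (\<Oplus>j\<in>{..i}. f (take j w) \<otimes> g (take (i - j) (drop j w)))"
      by (rule finsum_cong') (use i in \<open>auto simp: Pi_def cf cg min_def drop_take\<close>)
    then show "(\<Oplus>j\<in>{..length (take i w)}. f (take j (take i w)) \<otimes> g (drop j (take i w))) \<otimes> h (drop i w) =
         (\<Oplus>j\<in>{..i}. f (take j w) \<otimes> g (take (i - j) (drop j w))) \<otimes> h (drop i w)" by simp
  qed (auto simp: Pi_def cf cg ch intro!: finsum_closed)
  also have "\<dots> = (\<Oplus>i\<in>{..?n}. \<Oplus>j\<in>{..i}. F i j)"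
    by (rule finsum_cong') (auto simp: Pi_def cf cg ch F_def Fc finsum_ldistr[OF _ ch] intro!: finsum_closed)
  also have "\<dots> = (\<Oplus>j\<in>{..?n}. \<Oplus>i\<in>{j..?n}. F i j)" by (rule swap_tri[OF Fc])
  also have "\<dots> = (\<Oplus>j\<in>{..?n}. \<Oplus>k\<in>{..?n - j}. F (j + k) j)"
  proof (rule finsum_cong')
    fix j assume j: "j \<in> {..?n}"
    have im: "(\<lambda>k. j + k) ` {..?n - j} = {j..?n}" using j
      by (auto simp: image_iff) (metis atMost_iff diff_le_mono le_add_diff_inverse)
    have "(\<Oplus>k\<in>{..?n - j}. F (j + k) j) = (\<Oplus>i\<in>(\<lambda>k. j + k) ` {..?n - j}. F i j)"
      by (rule finsum_reindex[symmetric, where f = "\<lambda>i. F i j" and h = "\<lambda>k. j + k", simplified o_def]) (auto simp: Fc inj_on_def)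
    then show "(\<Oplus>i\<in>{j..?n}. F i j) = (\<Oplus>k\<in>{..?n - j}. F (j + k) j)" using im by simp
  qed (auto simp: Pi_def Fc intro!: finsum_closed)
  also have "\<dots> = (\<Oplus>j\<in>{..?n}. f (take j w) \<otimes> (\<Oplus>k\<in>{..?n - j}. g (take k (drop j w)) \<otimes> h (drop k (drop j w))))"
    by (rule finsum_cong') (auto simp: Pi_def cf cg ch F_def finsum_rdistr[OF _ cf] m_assoc drop_drop add.commute intro!: finsum_cong' finsum_closed)
  also have "\<dots> = (f \<otimes>\<^bsub>FA\<^esub> (g \<otimes>\<^bsub>FA\<^esub> h)) w"
    unfolding FA_mult by simp
  finally show "((f \<otimes>\<^bsub>FA\<^esub> g) \<otimes>\<^bsub>FA\<^esub> h) w = (f \<otimes>\<^bsub>FA\<^esub> (g \<otimes>\<^bsub>FA\<^esub> h)) w" .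
qed


lemma FA_l_one:
  assumes f: "f \<in> carrier FA"
  shows "\<one>\<^bsub>FA\<^esub> \<otimes>\<^bsub>FA\<^esub> f = f"
proof
  fix w
  have "(\<one>\<^bsub>FA\<^esub> \<otimes>\<^bsub>FA\<^esub> f) w = (\<Oplus> i\<in>{..length w}. (if take i w = [] then \<one> else \<zero>) \<otimes> f (drop i w))"
    by (simp add: FA_mult FA_one)
  also have "\<dots> = (if take 0 w = [] then \<one> else \<zero>) \<otimes> f (drop 0 w)"
    by (rule finsum_single) (auto simp: FA_carrierD[OF f])
  finally show "(\<one>\<^bsub>FA\<^esub> \<otimes>\<^bsub>FA\<^esub> f) w = f w" by (simp add: FA_carrierD[OF f])
qed

lemma FA_r_one:
  assumes f: "f \<in> carrier FA"
  shows "f \<otimes>\<^bsub>FA\<^esub> \<one>\<^bsub>FA\<^esub> = f"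
proof
  fix w
  have "(f \<otimes>\<^bsub>FA\<^esub> \<one>\<^bsub>FA\<^esub>) w = (\<Oplus> i\<in>{..length w}. f (take i w) \<otimes> (if drop i w = [] then \<one> else \<zero>))"
    by (simp add: FA_mult FA_one)
  also have "\<dots> = f (take (length w) w) \<otimes> (if drop (length w) w = [] then \<one> else \<zero>)"
    by (rule finsum_single) (auto simp: FA_carrierD[OF f])
  finally show "(f \<otimes>\<^bsub>FA\<^esub> \<one>\<^bsub>FA\<^esub>) w = f w" by (simp add: FA_carrierD[OF f])
qed

lemma FA_add_closed:
  assumes f: "f \<in> carrier FA" and g: "g \<in> carrier FA"
  shows "f \<oplus>\<^bsub>FA\<^esub> g \<in> carrier FA"
proof (rule FA_carrierI)
  show "\<And>w. (f \<oplus>\<^bsub>FA\<^esub> g) w \<in> carrier R" by (simp add: FA_add FA_carrierD[OF f] FA_carrierD[OF g])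
  have "{w. (f \<oplus>\<^bsub>FA\<^esub> g) w \<noteq> \<zero>} \<subseteq> {w. f w \<noteq> \<zero>} \<union> {w. g w \<noteq> \<zero>}"
    using FA_carrierD[OF g] by (auto simp: FA_add)
  then show "finite {w. (f \<oplus>\<^bsub>FA\<^esub> g) w \<noteq> \<zero>}"
    using FA_carrierD2[OF f] FA_carrierD2[OF g] finite_subset by blast
qed

lemma FA_is_ring: "ring (free_alg R :: (('v,'e) lgen list \<Rightarrow> 'a) ring)"
proof (rule ringI)
  show "abelian_group (FA :: (('v,'e) lgen list \<Rightarrow> 'a) ring)"
  proof (rule abelian_groupI)
    show "\<zero>\<^bsub>FA\<^esub> \<in> carrier FA" by (simp add: FA_zero free_alg_simps)
  next
    fix x y :: "('v,'e) lgen list \<Rightarrow> 'a" assume x: "x \<in> carrier FA" and y: "y \<in> carrier FA"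
    show "x \<oplus>\<^bsub>FA\<^esub> y \<in> carrier FA" using x y by (rule FA_add_closed)
  next
    fix x y z :: "('v,'e) lgen list \<Rightarrow> 'a" assume x: "x \<in> carrier FA" and y: "y \<in> carrier FA" and z: "z \<in> carrier FA"
    note cx = FA_carrierD[OF x] and cy = FA_carrierD[OF y] and cz = FA_carrierD[OF z]
    show "x \<oplus>\<^bsub>FA\<^esub> y \<oplus>\<^bsub>FA\<^esub> z = x \<oplus>\<^bsub>FA\<^esub> (y \<oplus>\<^bsub>FA\<^esub> z)"
      by (rule ext) (simp add: FA_add cx cy cz a_assoc)
  next
    fix x y :: "('v,'e) lgen list \<Rightarrow> 'a" assume x: "x \<in> carrier FA" and y: "y \<in> carrier FA"
    note cx = FA_carrierD[OF x] and cy = FA_carrierD[OF y]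
    show "x \<oplus>\<^bsub>FA\<^esub> y = y \<oplus>\<^bsub>FA\<^esub> x"
      by (rule ext) (simp add: FA_add cx cy a_comm)
  next
    fix x :: "('v,'e) lgen list \<Rightarrow> 'a" assume x: "x \<in> carrier FA"
    note cx = FA_carrierD[OF x]
    show "\<zero>\<^bsub>FA\<^esub> \<oplus>\<^bsub>FA\<^esub> x = x"
      by (rule ext) (simp add: FA_add FA_zero cx)
  next
    fix x :: "('v,'e) lgen list \<Rightarrow> 'a" assume x: "x \<in> carrier FA"
    note cx = FA_carrierD[OF x]
    show "\<exists>y\<in>carrier FA. y \<oplus>\<^bsub>FA\<^esub> x = \<zero>\<^bsub>FA\<^esub>"
    proof (intro bexI)
      show "(\<lambda>w. \<ominus> x w) \<oplus>\<^bsub>FA\<^esub> x = \<zero>\<^bsub>FA\<^esub>"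
        by (rule ext) (simp add: FA_add FA_zero cx l_neg)
      have "{w. \<ominus> x w \<noteq> \<zero>} = {w. x w \<noteq> \<zero>}"
        using cx by (auto simp: minus_equality)
      then show "(\<lambda>w. \<ominus> x w) \<in> carrier FA"
        using FA_carrierD2[OF x] by (intro FA_carrierI) (auto simp: cx)
    qed
  qed
  show "monoid (FA :: (('v,'e) lgen list \<Rightarrow> 'a) ring)"
  proof (rule monoidI)
    show "\<one>\<^bsub>FA\<^esub> \<in> carrier FA"
    proof (rule FA_carrierI)
      show "\<And>w. \<one>\<^bsub>FA\<^esub> w \<in> carrier R" by (simp add: FA_one)
      have "{w. \<one>\<^bsub>FA\<^esub> w \<noteq> \<zero>} \<subseteq> {[]}" by (auto simp: FA_one split: if_splits)
      then show "finite {w. \<one>\<^bsub>FA\<^esub> w \<noteq> \<zero>}" using finite_subset by blast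
    qed
  qed (auto simp: FA_mult_closed FA_mult_assoc FA_l_one FA_r_one)
next
  fix x y z :: "('v,'e) lgen list \<Rightarrow> 'a" assume x: "x \<in> carrier FA" and y: "y \<in> carrier FA" and z: "z \<in> carrier FA"
  note cx = FA_carrierD[OF x] and cy = FA_carrierD[OF y] and cz = FA_carrierD[OF z]
  show "(x \<oplus>\<^bsub>FA\<^esub> y) \<otimes>\<^bsub>FA\<^esub> z = x \<otimes>\<^bsub>FA\<^esub> z \<oplus>\<^bsub>FA\<^esub> y \<otimes>\<^bsub>FA\<^esub> z"
    by (rule ext) (simp add: FA_add FA_mult cx cy cz l_distr finsum_addf Pi_def)
  show "z \<otimes>\<^bsub>FA\<^esub> (x \<oplus>\<^bsub>FA\<^esub> y) = z \<otimes>\<^bsub>FA\<^esub> x \<oplus>\<^bsub>FA\<^esub> z \<otimes>\<^bsub>FA\<^esub> y"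
    by (rule ext) (simp add: FA_add FA_mult cx cy cz r_distr finsum_addf Pi_def)
qed

end


definition scw :: "('r, 'm) ring_scheme \<Rightarrow> 'r \<Rightarrow> ('v, 'e) lgen list \<Rightarrow> (('v, 'e) lgen list \<Rightarrow> 'r)" where
  "scw R c u = (\<lambda>w. if w = u then c else \<zero>\<^bsub>R\<^esub>)"

lemma mon_scw: "mon R w = scw R \<one>\<^bsub>R\<^esub> w"
  by (simp add: mon_def scw_def)

context ring
begin

lemma scw_carrier:
  assumes "c \<in> carrier R"
  shows "scw R c u \<in> carrier FA"
proof (rule FA_carrierI)
  show "\<And>w. scw R c u w \<in> carrier R" using assms by (simp add: scw_def)
  have "{w. scw R c u w \<noteq> \<zero>} \<subseteq> {u}" by (auto simp: scw_def split: if_splits)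
  then show "finite {w. scw R c u w \<noteq> \<zero>}" using finite_subset by blast
qed

lemma mon_carrier: "mon R u \<in> carrier FA"
  by (simp add: mon_scw scw_carrier)

lemma scw_mult:
  fixes u v :: "('v,'e) lgen list"
  assumes c: "c \<in> carrier R" and d: "d \<in> carrier R"
  shows "scw R c u \<otimes>\<^bsub>FA\<^esub> scw R d v = scw R (c \<otimes> d) (u @ v)"
proof
  fix w :: "('v,'e) lgen list"
  show "(scw R c u \<otimes>\<^bsub>FA\<^esub> scw R d v) w = scw R (c \<otimes> d) (u @ v) w"
  proof (cases "w = u @ v")
    case True
    have "(scw R c u \<otimes>\<^bsub>FA\<^esub> scw R d v) w = (\<Oplus>i\<in>{..length w}. scw R c u (take i w) \<otimes> scw R d v (drop i w))"
      by (simp add: FA_mult)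
    also have "\<dots> = scw R c u (take (length u) w) \<otimes> scw R d v (drop (length u) w)"
      by (rule finsum_single) (use True c d in \<open>auto simp: scw_def dest: arg_cong[of _ _ length]\<close>)
    finally show ?thesis using True by (simp add: scw_def)
  next
    case False
    have "(scw R c u \<otimes>\<^bsub>FA\<^esub> scw R d v) w = (\<Oplus>i\<in>{..length w}. scw R c u (take i w) \<otimes> scw R d v (drop i w))"
      by (simp add: FA_mult)
    also have "\<dots> = \<zero>"
      by (rule finsum_allzero) (use False c d in \<open>auto simp: scw_def\<close>)
    finally show ?thesis using False by (simp add: scw_def)
  qed
qed

lemma mon_mult: "mon R u \<otimes>\<^bsub>FA\<^esub> mon R v = mon R (u @ v)"
  by (simp add: mon_scw scw_mult)

lemma scw_add: "c \<in> carrier R \<Longrightarrow> d \<in> carrier R \<Longrightarrow> scw R c u \<oplus>\<^bsub>FA\<^esub> scw R d u = scw R (c \<oplus> d) u"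
  by (rule ext) (simp add: scw_def FA_add)

lemma scw_zero: "scw R \<zero> u = \<zero>\<^bsub>FA\<^esub>"
  by (rule ext) (simp add: scw_def FA_zero)

lemma scw_split:
  fixes u :: "('v,'e) lgen list"
  assumes "c \<in> carrier R"
  shows "scw R c u = scw R c [] \<otimes>\<^bsub>FA\<^esub> mon R u" "scw R c u = mon R u \<otimes>\<^bsub>FA\<^esub> scw R c []"
  using assms by (simp_all add: mon_scw scw_mult)

lemma FA_finsum_apply:
  fixes F :: "'i \<Rightarrow> ('v,'e) lgen list \<Rightarrow> 'a"
  assumes "finite A" "F \<in> A \<rightarrow> carrier FA"
  shows "(finsum FA F A) w = (\<Oplus>i\<in>A. F i w)"
  using assms
proof (induction A rule: finite_induct)
  case empty
  interpret F: ring "FA :: (('v,'e) lgen list \<Rightarrow> 'a) ring" by (rule FA_is_ring)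
  show ?case by (simp add: FA_zero)
next
  case (insert a A)
  interpret F: ring "FA :: (('v,'e) lgen list \<Rightarrow> 'a) ring" by (rule FA_is_ring)
  have "finsum FA F (insert a A) = F a \<oplus>\<^bsub>FA\<^esub> finsum FA F A"
    using insert by (intro F.finsum_insert) auto
  then show ?case using insert by (simp add: FA_add FA_carrierD Pi_def)
qed

lemma FA_repr:
  fixes x :: "('v,'e) lgen list \<Rightarrow> 'a"
  assumes x: "x \<in> carrier FA"
  shows "x = finsum FA (\<lambda>u. scw R (x u) u) {u. x u \<noteq> \<zero>}"
proof
  fix w
  have fin: "finite {u. x u \<noteq> \<zero>}" by (rule FA_carrierD2[OF x])
  have "(finsum FA (\<lambda>u. scw R (x u) u) {u. x u \<noteq> \<zero>}) w = (\<Oplus>u\<in>{u. x u \<noteq> \<zero>}. scw R (x u) u w)"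
    by (rule FA_finsum_apply) (auto simp: fin scw_carrier FA_carrierD[OF x])
  also have "\<dots> = x w"
  proof (cases "x w = \<zero>")
    case True
    then show ?thesis by (simp add: scw_def, intro finsum_allzero) auto
  next
    case False
    have "(\<Oplus>u\<in>{u. x u \<noteq> \<zero>}. scw R (x u) u w) = scw R (x w) w w"
      by (rule finsum_single) (use False fin in \<open>auto simp: scw_def FA_carrierD[OF x]\<close>)
    then show ?thesis by (simp add: scw_def)
  qed
  finally show "x w = (finsum FA (\<lambda>u. scw R (x u) u) {u. x u \<noteq> \<zero>}) w" by simp
qed

end


lemma (in abelian_group) minus_zero_eq:
  assumes "x \<in> carrier G" "y \<in> carrier G" "x \<ominus> y = \<zero>"
  shows "x = y"
proof -
  have "x = x \<oplus> (\<ominus> y \<oplus> y)" using assms by (simp add: l_neg)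
  also have "\<dots> = (x \<ominus> y) \<oplus> y" using assms by (simp add: minus_eq a_assoc[symmetric])
  finally show ?thesis using assms by simp
qed

lemma (in ring_hom_ring) hom_finsum_gen:
  assumes "finite A" "f \<in> A \<rightarrow> carrier R"
  shows "h (finsum R f A) = finsum S (h \<circ> f) A"
  using assms
proof (induction A rule: finite_induct)
  case empty then show ?case by simp
next
  case (insert a A)
  then show ?case by (simp add: Pi_def R.finsum_insert S.finsum_insert)
qed

locale lpa = ring R for R :: "('a, 'm) ring_scheme" (structure) +
  fixes E0 :: "'v set" and E1 :: "'e set" and s r :: "'e \<Rightarrow> 'v"
  assumes fg: "finite_graph E0 E1 s r"
begin

abbreviation "F \<equiv> (free_alg R :: (('v,'e) lgen list \<Rightarrow> 'a) ring)"
abbreviation "I \<equiv> lpa_ideal R E0 E1 s r"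
abbreviation "A \<equiv> LPA R E0 E1 s r"

lemma finE0: "finite E0" and finE1: "finite E1" and sE: "\<And>e. e \<in> E1 \<Longrightarrow> s e \<in> E0"
  and rE: "\<And>e. e \<in> E1 \<Longrightarrow> r e \<in> E0"
  using fg by (auto simp: finite_graph_def)

sublocale F: ring F by (rule FA_is_ring)

definition pr :: "(('v,'e) lgen list \<Rightarrow> 'a) \<Rightarrow> (('v,'e) lgen list \<Rightarrow> 'a) set" where
  "pr x = I +>\<^bsub>F\<^esub> x"

lemma rels_carrier: "lpa_rels R E0 E1 s r \<subseteq> carrier F"
  unfolding lpa_rels_def Let_def
  by (auto simp: mon_carrier intro!: F.minus_closed F.finsum_closed)

lemma I_ideal: "ideal I F"
  unfolding lpa_ideal_def by (rule F.genideal_ideal[OF rels_carrier])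

sublocale I: ideal I F by (rule I_ideal)

lemma A_ring: "ring A"
  unfolding LPA_def by (rule I.quotient_is_ring)

sublocale A: ring A by (rule A_ring)

lemma pr_hom: "ring_hom_ring F A pr"
  unfolding LPA_def pr_def[abs_def] by (rule I.rcos_ring_hom_ring)

sublocale P: ring_hom_ring F A pr by (rule pr_hom)

lemma rels_in_I: "lpa_rels R E0 E1 s r \<subseteq> I"
  unfolding lpa_ideal_def by (rule F.genideal_self[OF rels_carrier])

lemma pr_I: "x \<in> I \<Longrightarrow> pr x = \<zero>\<^bsub>A\<^esub>"
proof -
  assume "x \<in> I"
  then have "pr x = I" unfolding pr_def by (rule I.a_rcos_const)
  moreover have "\<zero>\<^bsub>A\<^esub> = I" unfolding LPA_def FactRing_def by simp
  ultimately show ?thesis by simp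
qed

lemma rel_eq:
  assumes x: "x \<in> carrier F" and y: "y \<in> carrier F" and xy: "x \<ominus>\<^bsub>F\<^esub> y \<in> lpa_rels R E0 E1 s r"
  shows "pr x = pr y"
proof -
  have "x \<ominus>\<^bsub>F\<^esub> y \<in> I" using xy rels_in_I by (rule subsetD[rotated])
  then have 1: "pr (x \<ominus>\<^bsub>F\<^esub> y) = \<zero>\<^bsub>A\<^esub>" by (rule pr_I)
  have "pr (x \<ominus>\<^bsub>F\<^esub> y) = pr x \<oplus>\<^bsub>A\<^esub> pr (\<ominus>\<^bsub>F\<^esub> y)"
    unfolding F.minus_eq using x y by (intro P.hom_add F.a_inv_closed)
  also have "\<dots> = pr x \<ominus>\<^bsub>A\<^esub> pr y"
    unfolding A.minus_eq using y by (simp only: P.hom_a_inv)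
  finally have eq: "pr (x \<ominus>\<^bsub>F\<^esub> y) = pr x \<ominus>\<^bsub>A\<^esub> pr y" .
  have "pr x \<ominus>\<^bsub>A\<^esub> pr y = \<zero>\<^bsub>A\<^esub>" using 1 eq by simp
  then show ?thesis using x y by (intro A.minus_zero_eq[of "pr x" "pr y"] P.hom_closed)
qed

definition gen :: "('v,'e) lgen \<Rightarrow> (('v,'e) lgen list \<Rightarrow> 'a) set" where
  "gen x = pr (mon R [x])"

definition wd :: "('v,'e) lgen list \<Rightarrow> (('v,'e) lgen list \<Rightarrow> 'a) set" where
  "wd w = pr (mon R w)"


lemma gen_carrier[simp]: "gen x \<in> carrier A"
  unfolding gen_def by (simp add: mon_carrier)

lemma wd_carrier[simp]: "wd w \<in> carrier A"
  unfolding wd_def by (simp add: mon_carrier)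

lemma wd_append: "wd (u @ v) = wd u \<otimes>\<^bsub>A\<^esub> wd v"
  unfolding wd_def by (simp add: mon_carrier mon_mult[symmetric])

lemma wd_Nil: "wd [] = \<one>\<^bsub>A\<^esub>"
proof -
  have "mon R [] = \<one>\<^bsub>F\<^esub>" by (rule ext) (simp add: mon_def FA_one)
  then show ?thesis unfolding wd_def by simp
qed

lemma wd_Cons: "wd (x # u) = gen x \<otimes>\<^bsub>A\<^esub> wd u"
  using wd_append[of "[x]" u] by (simp add: gen_def wd_def)

lemma wd_single: "wd [x] = gen x"
  by (simp add: gen_def wd_def)


lemma rels_mem:
  shows rels_V: "\<And>u w. u \<in> E0 \<Longrightarrow> w \<in> E0 \<Longrightarrow> mon R [Vx u, Vx w] \<ominus>\<^bsub>F\<^esub> (if u = w then mon R [Vx u] else \<zero>\<^bsub>F\<^esub>) \<in> lpa_rels R E0 E1 s r"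
    and rels_E1: "\<And>f. f \<in> E1 \<Longrightarrow> mon R [Vx (s f), Ed f] \<ominus>\<^bsub>F\<^esub> mon R [Ed f] \<in> lpa_rels R E0 E1 s r"
    and rels_E2: "\<And>f. f \<in> E1 \<Longrightarrow> mon R [Ed f, Vx (r f)] \<ominus>\<^bsub>F\<^esub> mon R [Ed f] \<in> lpa_rels R E0 E1 s r"
    and rels_G1: "\<And>f. f \<in> E1 \<Longrightarrow> mon R [Vx (r f), Gh f] \<ominus>\<^bsub>F\<^esub> mon R [Gh f] \<in> lpa_rels R E0 E1 s r"
    and rels_G2: "\<And>f. f \<in> E1 \<Longrightarrow> mon R [Gh f, Vx (s f)] \<ominus>\<^bsub>F\<^esub> mon R [Gh f] \<in> lpa_rels R E0 E1 s r"
    and rels_GE: "\<And>f g. f \<in> E1 \<Longrightarrow> g \<in> E1 \<Longrightarrow> mon R [Gh f, Ed g] \<ominus>\<^bsub>F\<^esub> (if f = g then mon R [Vx (r f)] else \<zero>\<^bsub>F\<^esub>) \<in> lpa_rels R E0 E1 s r"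
    and rels_CK: "\<And>v. v \<in> E0 \<Longrightarrow> {f \<in> E1. s f = v} \<noteq> {} \<Longrightarrow> finite {f \<in> E1. s f = v} \<Longrightarrow>
        (finsum F (\<lambda>f. mon R [Ed f, Gh f]) {f \<in> E1. s f = v}) \<ominus>\<^bsub>F\<^esub> mon R [Vx v] \<in> lpa_rels R E0 E1 s r"
    and rels_ONE: "\<one>\<^bsub>F\<^esub> \<ominus>\<^bsub>F\<^esub> (finsum F (\<lambda>v. mon R [Vx v]) E0) \<in> lpa_rels R E0 E1 s r"
  unfolding lpa_rels_def Let_def
  subgoal by (rule UnI1, rule UnI1, rule UnI1, rule UnI1, rule UnI1, rule UnI1, rule UnI1) blast
  subgoal by (rule UnI1, rule UnI1, rule UnI1, rule UnI1, rule UnI1, rule UnI1, rule UnI2) blast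
  subgoal by (rule UnI1, rule UnI1, rule UnI1, rule UnI1, rule UnI1, rule UnI2) blast
  subgoal by (rule UnI1, rule UnI1, rule UnI1, rule UnI1, rule UnI2) blast
  subgoal by (rule UnI1, rule UnI1, rule UnI1, rule UnI2) blast
  subgoal by (rule UnI1, rule UnI1, rule UnI2) blast
  subgoal by (rule UnI1, rule UnI2) blast
  subgoal by (rule UnI2) blast
  done

lemma relV:
  assumes "u \<in> E0" "w \<in> E0"
  shows "gen (Vx u) \<otimes>\<^bsub>A\<^esub> gen (Vx w) = (if u = w then gen (Vx u) else \<zero>\<^bsub>A\<^esub>)"
proof -
  have "pr (mon R [Vx u, Vx w]) = pr (if u = w then mon R [Vx u] else \<zero>\<^bsub>F\<^esub>)"
    by (rule rel_eq[OF _ _ rels_V[OF assms]]) (auto simp: mon_carrier)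
  moreover have "wd [Vx u, Vx w] = gen (Vx u) \<otimes>\<^bsub>A\<^esub> gen (Vx w)"
    using wd_Cons[of "Vx u" "[Vx w]"] wd_single by simp
  ultimately show ?thesis by (auto simp: wd_def gen_def)
qed

lemma relE1:
  assumes "f \<in> E1"
  shows "gen (Vx (s f)) \<otimes>\<^bsub>A\<^esub> gen (Ed f) = gen (Ed f)"
proof -
  have "pr (mon R [Vx (s f), Ed f]) = pr (mon R [Ed f])"
    by (rule rel_eq) (use assms in \<open>auto simp: mon_carrier intro: rels_mem\<close>)
  then show ?thesis using wd_Cons[of "Vx (s f)" "[Ed f]"] wd_single by (simp add: wd_def gen_def)
qed

lemma relE2:
  assumes "f \<in> E1"
  shows "gen (Ed f) \<otimes>\<^bsub>A\<^esub> gen (Vx (r f)) = gen (Ed f)"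
proof -
  have "pr (mon R [Ed f, Vx (r f)]) = pr (mon R [Ed f])"
    by (rule rel_eq) (use assms in \<open>auto simp: mon_carrier intro: rels_mem\<close>)
  then show ?thesis using wd_Cons[of "Ed f" "[Vx (r f)]"] wd_single by (simp add: wd_def gen_def)
qed

lemma relG1:
  assumes "f \<in> E1"
  shows "gen (Vx (r f)) \<otimes>\<^bsub>A\<^esub> gen (Gh f) = gen (Gh f)"
proof -
  have "pr (mon R [Vx (r f), Gh f]) = pr (mon R [Gh f])"
    by (rule rel_eq) (use assms in \<open>auto simp: mon_carrier intro: rels_mem\<close>)
  then show ?thesis using wd_Cons[of "Vx (r f)" "[Gh f]"] wd_single by (simp add: wd_def gen_def)
qed

lemma relG2:
  assumes "f \<in> E1"
  shows "gen (Gh f) \<otimes>\<^bsub>A\<^esub> gen (Vx (s f)) = gen (Gh f)"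
proof -
  have "pr (mon R [Gh f, Vx (s f)]) = pr (mon R [Gh f])"
    by (rule rel_eq) (use assms in \<open>auto simp: mon_carrier intro: rels_mem\<close>)
  then show ?thesis using wd_Cons[of "Gh f" "[Vx (s f)]"] wd_single by (simp add: wd_def gen_def)
qed

lemma relGE:
  assumes "f \<in> E1" "g \<in> E1"
  shows "gen (Gh f) \<otimes>\<^bsub>A\<^esub> gen (Ed g) = (if f = g then gen (Vx (r f)) else \<zero>\<^bsub>A\<^esub>)"
proof -
  have "pr (mon R [Gh f, Ed g]) = pr (if f = g then mon R [Vx (r f)] else \<zero>\<^bsub>F\<^esub>)"
    by (rule rel_eq[OF _ _ rels_GE[OF assms]]) (auto simp: mon_carrier)
  moreover have "wd [Gh f, Ed g] = gen (Gh f) \<otimes>\<^bsub>A\<^esub> gen (Ed g)"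
    using wd_Cons[of "Gh f" "[Ed g]"] wd_single by simp
  ultimately show ?thesis by (auto simp: wd_def gen_def)
qed

lemma relCK:
  assumes "v \<in> E0" "{f \<in> E1. s f = v} \<noteq> {}"
  shows "finsum A (\<lambda>f. gen (Ed f) \<otimes>\<^bsub>A\<^esub> gen (Gh f)) {f \<in> E1. s f = v} = gen (Vx v)"
proof -
  have fin: "finite {f \<in> E1. s f = v}" using finE1 by simp
  have "pr (finsum F (\<lambda>f. mon R [Ed f, Gh f]) {f \<in> E1. s f = v}) = pr (mon R [Vx v])"
    by (rule rel_eq) (use assms fin in \<open>auto simp: mon_carrier intro!: F.finsum_closed rels_CK\<close>)
  moreover have "pr (finsum F (\<lambda>f. mon R [Ed f, Gh f]) {f \<in> E1. s f = v})
      = finsum A (pr \<circ> (\<lambda>f. mon R [Ed f, Gh f])) {f \<in> E1. s f = v}"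
    by (rule P.hom_finsum_gen) (use fin in \<open>auto simp: mon_carrier\<close>)
  moreover have "\<And>f. pr (mon R [Ed f, Gh f]) = gen (Ed f) \<otimes>\<^bsub>A\<^esub> gen (Gh f)"
    using wd_Cons wd_single by (metis wd_def)
  ultimately show ?thesis by (simp add: gen_def o_def)
qed

lemma relONE: "\<one>\<^bsub>A\<^esub> = finsum A (\<lambda>v. gen (Vx v)) E0"
proof -
  have "pr \<one>\<^bsub>F\<^esub> = pr (finsum F (\<lambda>v. mon R [Vx v]) E0)"
    by (rule rel_eq) (auto simp: mon_carrier intro!: F.finsum_closed rels_ONE)
  moreover have "pr (finsum F (\<lambda>v. mon R [Vx v]) E0) = finsum A (pr \<circ> (\<lambda>v. mon R [Vx v])) E0"
    by (rule P.hom_finsum_gen) (use finE0 in \<open>auto simp: mon_carrier\<close>)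
  ultimately show ?thesis by (simp add: gen_def o_def)
qed

end


lemma edge_path_Cons:
  "edge_path E1 s r (e # es) \<longleftrightarrow> e \<in> E1 \<and> (es = [] \<or> (edge_path E1 s r es \<and> s (hd es) = r e))"
proof
  assume H: "edge_path E1 s r (e # es)"
  then have "e \<in> E1" by (simp add: edge_path_def)
  moreover have "es = [] \<or> (edge_path E1 s r es \<and> s (hd es) = r e)"
  proof (cases es)
    case Nil then show ?thesis by simp
  next
    case (Cons x xs)
    have 1: "set es \<subseteq> E1" using H by (simp add: edge_path_def)
    have 2: "\<forall>i. Suc i < length es \<longrightarrow> s (es ! Suc i) = r (es ! i)"
    proof (intro allI impI)
      fix i assume "Suc i < length es"
      then have "Suc (Suc i) < length (e # es)" by simp
      then have "s ((e#es) ! Suc (Suc i)) = r ((e#es) ! Suc i)" using H unfolding edge_path_def by blast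
      then show "s (es ! Suc i) = r (es ! i)" by simp
    qed
    have "s ((e#es) ! Suc 0) = r ((e#es) ! 0)" using H Cons unfolding edge_path_def by auto
    then show ?thesis using 1 2 Cons by (simp add: edge_path_def)
  qed
  ultimately show "e \<in> E1 \<and> (es = [] \<or> (edge_path E1 s r es \<and> s (hd es) = r e))" by blast
next
  assume H: "e \<in> E1 \<and> (es = [] \<or> (edge_path E1 s r es \<and> s (hd es) = r e))"
  show "edge_path E1 s r (e # es)"
  proof (cases "es = []")
    case True then show ?thesis using H by (simp add: edge_path_def)
  next
    case False
    then have ep: "edge_path E1 s r es" and hd: "s (hd es) = r e" using H by auto
    show ?thesis unfolding edge_path_def
    proof (intro conjI allI impI)
      show "set (e # es) \<subseteq> E1" using H ep by (auto simp: edge_path_def)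
    next
      fix i assume i: "Suc i < length (e # es)"
      show "s ((e # es) ! Suc i) = r ((e # es) ! i)"
      proof (cases i)
        case 0 then show ?thesis using hd False by (simp add: hd_conv_nth)
      next
        case (Suc j) then show ?thesis using ep i unfolding edge_path_def by auto
      qed
    qed simp
  qed
qed

lemma edge_path_Nil: "\<not> edge_path E1 s r []"
  by (simp add: edge_path_def)

lemma edge_path_append:
  assumes "edge_path E1 s r xs" "edge_path E1 s r ys" "s (hd ys) = r (last xs)"
  shows "edge_path E1 s r (xs @ ys)"
  using assms
proof (induction xs)
  case Nil then show ?case by (simp add: edge_path_Nil)
next
  case (Cons x xs)
  show ?case
  proof (cases "xs = []")
    case True
    then show ?thesis using Cons.prems by (simp add: edge_path_Cons)
  next
    case False
    then have "edge_path E1 s r (xs @ ys)" using Cons by (simp add: edge_path_Cons)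
    then show ?thesis using Cons.prems False by (simp add: edge_path_Cons)
  qed
qed

lemma edge_path_appendD:
  assumes "edge_path E1 s r (xs @ ys)" "xs \<noteq> []"
  shows "edge_path E1 s r xs"
  using assms
proof (induction xs)
  case Nil then show ?case by simp
next
  case (Cons x xs)
  then show ?case by (cases "xs = []") (auto simp: edge_path_Cons)
qed

lemma gpath_simp: "gpath E0 E1 s r (v, es) \<longleftrightarrow> v \<in> E0 \<and> (es = [] \<or> (edge_path E1 s r es \<and> v = s (hd es)))"
  by (simp add: gpath_def)

definition rp :: "('e \<Rightarrow> 'v) \<Rightarrow> 'v \<times> 'e list \<Rightarrow> 'v" where
  "rp r p = (if snd p = [] then fst p else r (last (snd p)))"

context lpa
begin

abbreviation "vx v \<equiv> gen (Vx v)"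
abbreviation "ed e \<equiv> gen (Ed e)"
abbreviation "gh e \<equiv> gen (Gh e)"

definition Es :: "'e list \<Rightarrow> _" where "Es es = wd (map Ed es)"
definition Gs :: "'e list \<Rightarrow> _" where "Gs es = wd (map Gh (rev es))"
definition Pp :: "'v \<times> 'e list \<Rightarrow> _" where "Pp p = vx (fst p) \<otimes>\<^bsub>A\<^esub> Es (snd p)"
definition Gp :: "'v \<times> 'e list \<Rightarrow> _" where "Gp p = Gs (snd p) \<otimes>\<^bsub>A\<^esub> vx (fst p)"
abbreviation "gp \<equiv> gpath E0 E1 s r"

lemma Es_carrier[simp]: "Es es \<in> carrier A" by (simp add: Es_def)
lemma Gs_carrier[simp]: "Gs es \<in> carrier A" by (simp add: Gs_def)
lemma Pp_carrier[simp]: "Pp p \<in> carrier A" by (simp add: Pp_def)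
lemma Gp_carrier[simp]: "Gp p \<in> carrier A" by (simp add: Gp_def)

lemma Es_Nil: "Es [] = \<one>\<^bsub>A\<^esub>" by (simp add: Es_def wd_Nil)
lemma Gs_Nil: "Gs [] = \<one>\<^bsub>A\<^esub>" by (simp add: Gs_def wd_Nil)
lemma Es_Cons: "Es (e # es) = ed e \<otimes>\<^bsub>A\<^esub> Es es" by (simp add: Es_def wd_Cons)
lemma Es_append: "Es (xs @ ys) = Es xs \<otimes>\<^bsub>A\<^esub> Es ys" by (simp add: Es_def wd_append)
lemma Gs_append: "Gs (xs @ ys) = Gs ys \<otimes>\<^bsub>A\<^esub> Gs xs" by (simp add: Gs_def wd_append)
lemma Gs_Cons: "Gs (e # es) = Gs es \<otimes>\<^bsub>A\<^esub> gh e"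
  using Gs_append[of "[e]" es] by (simp add: Gs_def wd_single)
lemma Es_snoc: "Es (es @ [e]) = Es es \<otimes>\<^bsub>A\<^esub> ed e"
  using Es_append[of es "[e]"] by (simp add: Es_def wd_single)
lemma Gs_snoc: "Gs (es @ [e]) = gh e \<otimes>\<^bsub>A\<^esub> Gs es"
  using Gs_append[of es "[e]"] by (simp add: Gs_def wd_single)

lemma ed_vx: "e \<in> E1 \<Longrightarrow> w \<in> E0 \<Longrightarrow> ed e \<otimes>\<^bsub>A\<^esub> vx w = (if w = r e then ed e else \<zero>\<^bsub>A\<^esub>)"
proof -
  assume e: "e \<in> E1" and w: "w \<in> E0"
  have "ed e \<otimes>\<^bsub>A\<^esub> vx w = ed e \<otimes>\<^bsub>A\<^esub> (vx (r e) \<otimes>\<^bsub>A\<^esub> vx w)"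
    using relE2[OF e] by (simp add: A.m_assoc[symmetric])
  also have "\<dots> = (if w = r e then ed e else \<zero>\<^bsub>A\<^esub>)"
    using relV[OF rE[OF e] w] relE2[OF e] by auto
  finally show ?thesis .
qed

lemma vx_ed: "e \<in> E1 \<Longrightarrow> w \<in> E0 \<Longrightarrow> vx w \<otimes>\<^bsub>A\<^esub> ed e = (if w = s e then ed e else \<zero>\<^bsub>A\<^esub>)"
proof -
  assume e: "e \<in> E1" and w: "w \<in> E0"
  have "vx w \<otimes>\<^bsub>A\<^esub> ed e = (vx w \<otimes>\<^bsub>A\<^esub> vx (s e)) \<otimes>\<^bsub>A\<^esub> ed e"
    using relE1[OF e] by (simp add: A.m_assoc)
  also have "\<dots> = (if w = s e then ed e else \<zero>\<^bsub>A\<^esub>)"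
    using relV[OF w sE[OF e]] relE1[OF e] by auto
  finally show ?thesis .
qed

lemma gh_vx: "e \<in> E1 \<Longrightarrow> w \<in> E0 \<Longrightarrow> gh e \<otimes>\<^bsub>A\<^esub> vx w = (if w = s e then gh e else \<zero>\<^bsub>A\<^esub>)"
proof -
  assume e: "e \<in> E1" and w: "w \<in> E0"
  have "gh e \<otimes>\<^bsub>A\<^esub> vx w = gh e \<otimes>\<^bsub>A\<^esub> (vx (s e) \<otimes>\<^bsub>A\<^esub> vx w)"
    using relG2[OF e] by (simp add: A.m_assoc[symmetric])
  also have "\<dots> = (if w = s e then gh e else \<zero>\<^bsub>A\<^esub>)"
    using relV[OF sE[OF e] w] relG2[OF e] by auto
  finally show ?thesis .
qed

lemma vx_gh: "e \<in> E1 \<Longrightarrow> w \<in> E0 \<Longrightarrow> vx w \<otimes>\<^bsub>A\<^esub> gh e = (if w = r e then gh e else \<zero>\<^bsub>A\<^esub>)"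
proof -
  assume e: "e \<in> E1" and w: "w \<in> E0"
  have "vx w \<otimes>\<^bsub>A\<^esub> gh e = (vx w \<otimes>\<^bsub>A\<^esub> vx (r e)) \<otimes>\<^bsub>A\<^esub> gh e"
    using relG1[OF e] by (simp add: A.m_assoc)
  also have "\<dots> = (if w = r e then gh e else \<zero>\<^bsub>A\<^esub>)"
    using relV[OF w rE[OF e]] relG1[OF e] by auto
  finally show ?thesis .
qed

end


context lpa
begin

lemma Es_vx:
  assumes "set es \<subseteq> E1" "es \<noteq> []" "w \<in> E0"
  shows "Es es \<otimes>\<^bsub>A\<^esub> vx w = (if w = r (last es) then Es es else \<zero>\<^bsub>A\<^esub>)"
proof -
  obtain xs l where es: "es = xs @ [l]" using assms(2) by (metis append_butlast_last_id)
  have l: "l \<in> E1" using assms(1) es by auto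
  have "Es es \<otimes>\<^bsub>A\<^esub> vx w = Es xs \<otimes>\<^bsub>A\<^esub> (ed l \<otimes>\<^bsub>A\<^esub> vx w)"
    by (simp add: es Es_snoc A.m_assoc)
  also have "\<dots> = (if w = r l then Es es else \<zero>\<^bsub>A\<^esub>)"
    using ed_vx[OF l assms(3)] by (simp add: es Es_snoc)
  finally show ?thesis using es by simp
qed

lemma vx_Es:
  assumes "set es \<subseteq> E1" "es \<noteq> []" "w \<in> E0"
  shows "vx w \<otimes>\<^bsub>A\<^esub> Es es = (if w = s (hd es) then Es es else \<zero>\<^bsub>A\<^esub>)"
proof -
  obtain e xs where es: "es = e # xs" using assms(2) by (cases es) auto
  have e: "e \<in> E1" using assms(1) es by auto
  have "vx w \<otimes>\<^bsub>A\<^esub> Es es = (vx w \<otimes>\<^bsub>A\<^esub> ed e) \<otimes>\<^bsub>A\<^esub> Es xs"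
    by (simp add: es Es_Cons A.m_assoc)
  also have "\<dots> = (if w = s e then Es es else \<zero>\<^bsub>A\<^esub>)"
    using vx_ed[OF e assms(3)] by (simp add: es Es_Cons)
  finally show ?thesis using es by simp
qed

lemma Gs_vx:
  assumes "set es \<subseteq> E1" "es \<noteq> []" "w \<in> E0"
  shows "Gs es \<otimes>\<^bsub>A\<^esub> vx w = (if w = s (hd es) then Gs es else \<zero>\<^bsub>A\<^esub>)"
proof -
  obtain e xs where es: "es = e # xs" using assms(2) by (cases es) auto
  have e: "e \<in> E1" using assms(1) es by auto
  have "Gs es \<otimes>\<^bsub>A\<^esub> vx w = Gs xs \<otimes>\<^bsub>A\<^esub> (gh e \<otimes>\<^bsub>A\<^esub> vx w)"
    by (simp add: es Gs_Cons A.m_assoc)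
  also have "\<dots> = (if w = s e then Gs es else \<zero>\<^bsub>A\<^esub>)"
    using gh_vx[OF e assms(3)] by (simp add: es Gs_Cons)
  finally show ?thesis using es by simp
qed

lemma vx_Gs:
  assumes "set es \<subseteq> E1" "es \<noteq> []" "w \<in> E0"
  shows "vx w \<otimes>\<^bsub>A\<^esub> Gs es = (if w = r (last es) then Gs es else \<zero>\<^bsub>A\<^esub>)"
proof -
  obtain xs l where es: "es = xs @ [l]" using assms(2) by (metis append_butlast_last_id)
  have l: "l \<in> E1" using assms(1) es by auto
  have "vx w \<otimes>\<^bsub>A\<^esub> Gs es = (vx w \<otimes>\<^bsub>A\<^esub> gh l) \<otimes>\<^bsub>A\<^esub> Gs xs"
    by (simp add: es Gs_snoc A.m_assoc)
  also have "\<dots> = (if w = r l then Gs es else \<zero>\<^bsub>A\<^esub>)"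
    using vx_gh[OF l assms(3)] by (simp add: es Gs_snoc)
  finally show ?thesis using es by simp
qed

lemma gp_fst: "gp p \<Longrightarrow> fst p \<in> E0"
  by (cases p) (simp add: gpath_simp)

lemma gp_set: "gp p \<Longrightarrow> set (snd p) \<subseteq> E1"
  by (cases p) (auto simp: gpath_simp edge_path_def)

lemma gp_rp: "gp p \<Longrightarrow> rp r p \<in> E0"
  by (cases p) (auto simp: gpath_simp rp_def edge_path_def intro!: rE)

lemma Pp_vx:
  assumes "gp p" "w \<in> E0"
  shows "Pp p \<otimes>\<^bsub>A\<^esub> vx w = (if w = rp r p then Pp p else \<zero>\<^bsub>A\<^esub>)"
proof (cases "snd p = []")
  case True
  then show ?thesis using relV[OF gp_fst[OF assms(1)] assms(2)]
    by (auto simp: Pp_def Es_Nil rp_def)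
next
  case False
  have "Pp p \<otimes>\<^bsub>A\<^esub> vx w = vx (fst p) \<otimes>\<^bsub>A\<^esub> (Es (snd p) \<otimes>\<^bsub>A\<^esub> vx w)"
    by (simp add: Pp_def A.m_assoc)
  also have "\<dots> = (if w = rp r p then Pp p else \<zero>\<^bsub>A\<^esub>)"
    using Es_vx[OF gp_set[OF assms(1)] False assms(2)] False by (simp add: rp_def Pp_def)
  finally show ?thesis .
qed

lemma vx_Pp:
  assumes "gp p" "w \<in> E0"
  shows "vx w \<otimes>\<^bsub>A\<^esub> Pp p = (if w = fst p then Pp p else \<zero>\<^bsub>A\<^esub>)"
proof -
  have "vx w \<otimes>\<^bsub>A\<^esub> Pp p = (vx w \<otimes>\<^bsub>A\<^esub> vx (fst p)) \<otimes>\<^bsub>A\<^esub> Es (snd p)"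
    by (simp add: Pp_def A.m_assoc)
  then show ?thesis using relV[OF assms(2) gp_fst[OF assms(1)]] by (simp add: Pp_def)
qed

lemma Gp_vx:
  assumes "gp p" "w \<in> E0"
  shows "Gp p \<otimes>\<^bsub>A\<^esub> vx w = (if w = fst p then Gp p else \<zero>\<^bsub>A\<^esub>)"
proof -
  have "Gp p \<otimes>\<^bsub>A\<^esub> vx w = Gs (snd p) \<otimes>\<^bsub>A\<^esub> (vx (fst p) \<otimes>\<^bsub>A\<^esub> vx w)"
    by (simp add: Gp_def A.m_assoc)
  then show ?thesis using relV[OF gp_fst[OF assms(1)] assms(2)] by (auto simp: Gp_def)
qed

lemma vx_Gp:
  assumes "gp p" "w \<in> E0"
  shows "vx w \<otimes>\<^bsub>A\<^esub> Gp p = (if w = rp r p then Gp p else \<zero>\<^bsub>A\<^esub>)"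
proof (cases "snd p = []")
  case True
  then show ?thesis using relV[OF assms(2) gp_fst[OF assms(1)]]
    by (auto simp: Gp_def Gs_Nil rp_def)
next
  case False
  have "vx w \<otimes>\<^bsub>A\<^esub> Gp p = (vx w \<otimes>\<^bsub>A\<^esub> Gs (snd p)) \<otimes>\<^bsub>A\<^esub> vx (fst p)"
    by (simp add: Gp_def A.m_assoc)
  also have "\<dots> = (if w = rp r p then Gp p else \<zero>\<^bsub>A\<^esub>)"
    using vx_Gs[OF gp_set[OF assms(1)] False assms(2)] False by (simp add: rp_def Gp_def)
  finally show ?thesis .
qed


lemma gp_concat:
  assumes "gp p" "gp q" "rp r p = fst q"
  shows "gp (fst p, snd p @ snd q)"
proof -
  obtain v as where p: "p = (v, as)" by (cases p)
  obtain u cs where q: "q = (u, cs)" by (cases q)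
  show ?thesis
  proof (cases "as = []")
    case True then show ?thesis using assms p q by (simp add: rp_def)
  next
    case False
    show ?thesis
    proof (cases "cs = []")
      case True then show ?thesis using assms p q by simp
    next
      case cs: False
      have "edge_path E1 s r (as @ cs)"
        using assms p q False cs by (intro edge_path_append) (auto simp: gpath_simp rp_def)
      then show ?thesis using assms p q False by (auto simp: gpath_simp)
    qed
  qed
qed

lemma Pp_Pp:
  assumes "gp p" "gp q"
  shows "Pp p \<otimes>\<^bsub>A\<^esub> Pp q = (if rp r p = fst q then Pp (fst p, snd p @ snd q) else \<zero>\<^bsub>A\<^esub>)"
proof -
  have "Pp p \<otimes>\<^bsub>A\<^esub> Pp q = (Pp p \<otimes>\<^bsub>A\<^esub> vx (fst q)) \<otimes>\<^bsub>A\<^esub> Es (snd q)"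
    by (simp add: Pp_def[of q] A.m_assoc)
  also have "\<dots> = (if rp r p = fst q then Pp (fst p, snd p @ snd q) else \<zero>\<^bsub>A\<^esub>)"
    using Pp_vx[OF assms(1) gp_fst[OF assms(2)]]
    by (auto simp: Pp_def Es_append A.m_assoc)
  finally show ?thesis .
qed

lemma Gp_Gp:
  assumes "gp p" "gp q"
  shows "Gp p \<otimes>\<^bsub>A\<^esub> Gp q = (if rp r q = fst p then Gp (fst q, snd q @ snd p) else \<zero>\<^bsub>A\<^esub>)"
proof -
  have "Gp p \<otimes>\<^bsub>A\<^esub> Gp q = Gs (snd p) \<otimes>\<^bsub>A\<^esub> (vx (fst p) \<otimes>\<^bsub>A\<^esub> Gp q)"
    by (simp add: Gp_def[of p] A.m_assoc)
  also have "\<dots> = (if rp r q = fst p then Gp (fst q, snd q @ snd p) else \<zero>\<^bsub>A\<^esub>)"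
    using vx_Gp[OF assms(2) gp_fst[OF assms(1)]]
    by (auto simp: Gp_def Gs_append A.m_assoc)
  finally show ?thesis .
qed

lemma GP:
  assumes "gp (v, bs)" "gp (u, cs)"
  shows "Gp (v, bs) \<otimes>\<^bsub>A\<^esub> Pp (u, cs) = \<zero>\<^bsub>A\<^esub>
    \<or> (\<exists>q. gp q \<and> length bs + length (snd q) = length cs \<and> Gp (v, bs) \<otimes>\<^bsub>A\<^esub> Pp (u, cs) = Pp q)
    \<or> (\<exists>q. gp q \<and> length cs + length (snd q) = length bs \<and> Gp (v, bs) \<otimes>\<^bsub>A\<^esub> Pp (u, cs) = Gp q)"
  using assms
proof (induction bs arbitrary: v u cs)
  case Nil
  have "Gp (v, []) = vx v" by (simp add: Gp_def Gs_Nil)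
  then have "Gp (v, []) \<otimes>\<^bsub>A\<^esub> Pp (u, cs) = (if v = u then Pp (u, cs) else \<zero>\<^bsub>A\<^esub>)"
    using vx_Pp[OF Nil(2) gp_fst[OF Nil(1)]] by simp
  then show ?case using Nil by (cases "v = u") auto
next
  case (Cons b bs)
  have b: "b \<in> E1" and vb: "v = s b" and bs: "bs = [] \<or> (edge_path E1 s r bs \<and> s (hd bs) = r b)"
    using Cons.prems(1) by (auto simp: gpath_simp edge_path_Cons)
  show ?case
  proof (cases cs)
    case Nil
    have "Pp (u, []) = vx u" by (simp add: Pp_def Es_Nil)
    then have "Gp (v, b # bs) \<otimes>\<^bsub>A\<^esub> Pp (u, cs) = (if u = v then Gp (v, b # bs) else \<zero>\<^bsub>A\<^esub>)"
      using Gp_vx[OF Cons.prems(1) gp_fst[OF Cons.prems(2)]] Nil by simp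
    then show ?thesis
    proof (cases "u = v")
      case True
      then have "Gp (v, b # bs) \<otimes>\<^bsub>A\<^esub> Pp (u, cs) = Gp (v, b # bs)" using \<open>_ = (if u = v then _ else _)\<close> by simp
      then show ?thesis
        by (intro disjI2 exI[of _ "(v, b # bs)"]) (use Cons.prems(1) Nil in simp)
    qed simp
  next
    case (Cons c cs')
    have c: "c \<in> E1" and uc: "u = s c" and cs': "cs' = [] \<or> (edge_path E1 s r cs' \<and> s (hd cs') = r c)"
      using Cons.prems(2) Cons by (auto simp: gpath_simp edge_path_Cons)
    have G: "Gp (v, b # bs) = Gs bs \<otimes>\<^bsub>A\<^esub> gh b"
      using relG2[OF b] by (simp add: Gp_def Gs_Cons vb A.m_assoc)
    have P: "Pp (u, c # cs') = ed c \<otimes>\<^bsub>A\<^esub> Es cs'"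
      using relE1[OF c] by (simp add: Pp_def Es_Cons uc A.m_assoc[symmetric])
    have prod: "Gp (v, b # bs) \<otimes>\<^bsub>A\<^esub> Pp (u, cs) = Gs bs \<otimes>\<^bsub>A\<^esub> (gh b \<otimes>\<^bsub>A\<^esub> ed c) \<otimes>\<^bsub>A\<^esub> Es cs'"
      using G P Cons by (simp add: A.m_assoc)
    show ?thesis
    proof (cases "b = c")
      case False
      then show ?thesis using prod relGE[OF b c] by simp
    next
      case True
      have rb: "r b \<in> E0" by (rule rE[OF b])
      have g1: "gp (r b, bs)" using rb bs by (auto simp: gpath_simp)
      have g2: "gp (r b, cs')" using rb cs' True by (auto simp: gpath_simp)
      have "Gp (r b, bs) \<otimes>\<^bsub>A\<^esub> Pp (r b, cs') = Gs bs \<otimes>\<^bsub>A\<^esub> (vx (r b) \<otimes>\<^bsub>A\<^esub> vx (r b)) \<otimes>\<^bsub>A\<^esub> Es cs'"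
        by (simp add: Gp_def Pp_def A.m_assoc)
      also have "\<dots> = Gp (v, b # bs) \<otimes>\<^bsub>A\<^esub> Pp (u, cs)"
        using prod relGE[OF b c] relV[OF rb rb] True by simp
      finally have eq: "Gp (v, b # bs) \<otimes>\<^bsub>A\<^esub> Pp (u, cs) = Gp (r b, bs) \<otimes>\<^bsub>A\<^esub> Pp (r b, cs')" by simp
      show ?thesis using Cons.IH[OF g1 g2] unfolding eq using Cons by auto
    qed
  qed
qed

definition M where "M p q = Pp p \<otimes>\<^bsub>A\<^esub> Gp q"

lemma M_carrier[simp]: "M p q \<in> carrier A" by (simp add: M_def)

lemma M_mult:
  assumes "gp a" "gp b" "gp c" "gp d" "length (snd a) = length (snd b)" "length (snd c) = length (snd d)"
  shows "M a b \<otimes>\<^bsub>A\<^esub> M c d = \<zero>\<^bsub>A\<^esub> \<or>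
    (\<exists>a' d'. gp a' \<and> gp d' \<and> length (snd a') = length (snd d') \<and> M a b \<otimes>\<^bsub>A\<^esub> M c d = M a' d')"
proof -
  have eq: "M a b \<otimes>\<^bsub>A\<^esub> M c d = Pp a \<otimes>\<^bsub>A\<^esub> (Gp b \<otimes>\<^bsub>A\<^esub> Pp c) \<otimes>\<^bsub>A\<^esub> Gp d"
    by (simp add: M_def A.m_assoc)
  obtain v bs where b: "b = (v, bs)" by (cases b)
  obtain u cs where c: "c = (u, cs)" by (cases c)
  from GP[of v bs u cs] assms b c
  consider (z) "Gp b \<otimes>\<^bsub>A\<^esub> Pp c = \<zero>\<^bsub>A\<^esub>"
    | (p) q where "gp q" "length (snd b) + length (snd q) = length (snd c)" "Gp b \<otimes>\<^bsub>A\<^esub> Pp c = Pp q"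
    | (g) q where "gp q" "length (snd c) + length (snd q) = length (snd b)" "Gp b \<otimes>\<^bsub>A\<^esub> Pp c = Gp q"
    by auto
  then show ?thesis
  proof cases
    case z then show ?thesis using eq by simp
  next
    case p
    have "M a b \<otimes>\<^bsub>A\<^esub> M c d = (Pp a \<otimes>\<^bsub>A\<^esub> Pp q) \<otimes>\<^bsub>A\<^esub> Gp d" using eq p by simp
    also have "\<dots> = (if rp r a = fst q then M (fst a, snd a @ snd q) d else \<zero>\<^bsub>A\<^esub>)"
      using Pp_Pp[OF assms(1) p(1)] by (simp add: M_def)
    finally have e2: "M a b \<otimes>\<^bsub>A\<^esub> M c d = (if rp r a = fst q then M (fst a, snd a @ snd q) d else \<zero>\<^bsub>A\<^esub>)" .
    show ?thesis
    proof (cases "rp r a = fst q")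
      case True
      then show ?thesis using e2 gp_concat[OF assms(1) p(1)] assms(4-6) p(2)
        by (intro disjI2 exI[of _ "(fst a, snd a @ snd q)"] exI[of _ d]) simp
    qed (use e2 in simp)
  next
    case g
    have "M a b \<otimes>\<^bsub>A\<^esub> M c d = Pp a \<otimes>\<^bsub>A\<^esub> (Gp q \<otimes>\<^bsub>A\<^esub> Gp d)" using eq g by (simp add: A.m_assoc)
    also have "\<dots> = (if rp r d = fst q then M a (fst d, snd d @ snd q) else \<zero>\<^bsub>A\<^esub>)"
      using Gp_Gp[OF g(1) assms(4)] by (simp add: M_def)
    finally have e2: "M a b \<otimes>\<^bsub>A\<^esub> M c d = (if rp r d = fst q then M a (fst d, snd d @ snd q) else \<zero>\<^bsub>A\<^esub>)" .
    show ?thesis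
    proof (cases "rp r d = fst q")
      case True
      then show ?thesis using e2 gp_concat[OF assms(4) g(1)] assms(1,5,6) g(2)
        by (intro disjI2 exI[of _ a] exI[of _ "(fst d, snd d @ snd q)"]) simp
    qed (use e2 in simp)
  qed
qed

end


definition xv :: "('e \<Rightarrow> 'v) \<Rightarrow> ('e \<Rightarrow> 'v) \<Rightarrow> 'e list \<Rightarrow> nat \<Rightarrow> 'v" where
  "xv s r es k = (if k < length es then s (es ! k) else r (last es))"

lemma xv_Suc:
  assumes "edge_path E1 s r es" "k < length es"
  shows "xv s r es (Suc k) = r (es ! k)"
proof (cases "Suc k < length es")
  case True
  then show ?thesis using assms unfolding xv_def edge_path_def by auto
next
  case False
  then have "k = length es - 1" using assms(2) by simp
  then show ?thesis using False assms by (simp add: xv_def last_conv_nth edge_path_def)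
qed

lemma xv_in:
  assumes "finite_graph E0 E1 s r" "edge_path E1 s r es" "k \<le> length es"
  shows "xv s r es k \<in> E0"
proof -
  have ne: "es \<noteq> []" and sub: "set es \<subseteq> E1" using assms(2) by (auto simp: edge_path_def)
  have "s ` E1 \<subseteq> E0" "r ` E1 \<subseteq> E0" using assms(1) by (auto simp: finite_graph_def)
  moreover have "\<And>k. k < length es \<Longrightarrow> es ! k \<in> E1" using sub nth_mem by blast
  moreover have "last es \<in> E1" using sub ne last_in_set by blast
  ultimately show ?thesis unfolding xv_def by auto
qed

lemma cyc_data:
  assumes fg: "finite_graph E0 E1 s r" and ne: "condition_NE E1 s r"
    and ep: "edge_path E1 s r es" and L: "length es > card E0"
  shows "\<exists>i < length es. xv s r es i = xv s r es (length es)
     \<and> (\<forall>k. i < k \<and> k < length es \<longrightarrow> xv s r es k \<noteq> xv s r es (length es))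
     \<and> (\<forall>k f. i \<le> k \<and> k < length es \<and> f \<in> E1 \<and> s f = xv s r es k \<longrightarrow> f = es ! k)"
proof -
  define L where "L = length es"
  define x where "x = xv s r es"
  have finE0: "finite E0" using fg by (simp add: finite_graph_def)
  have ninj: "\<not> inj_on x {..L}"
  proof
    assume inj: "inj_on x {..L}"
    have "x ` {..L} \<subseteq> E0" using xv_in[OF fg ep] by (auto simp: x_def L_def)
    then have "card (x ` {..L}) \<le> card E0" using finE0 by (rule card_mono[rotated])
    moreover have "card (x ` {..L}) = Suc L" using inj by (simp add: card_image)
    ultimately show False using L by (simp add: L_def)
  qed
  define S where "S = {i. i \<le> L \<and> (\<exists>j. i < j \<and> j \<le> L \<and> x i = x j)}"
  have "S \<noteq> {}"
  proof -
    obtain a b where ab: "a \<le> L" "b \<le> L" "x a = x b" "a \<noteq> b" using ninj unfolding inj_on_def by auto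
    show ?thesis
    proof (cases "a < b")
      case True then have "a \<in> S" using ab by (auto simp: S_def)
      then show ?thesis by auto
    next
      case False then have "b \<in> S" using ab unfolding S_def by (auto intro!: exI[of _ a])
      then show ?thesis by auto
    qed
  qed
  moreover have "finite S" by (simp add: S_def)
  ultimately have i0S: "Max S \<in> S" by (intro Max_in)
  define i0 where "i0 = Max S"
  have maxS: "\<And>i. i \<in> S \<Longrightarrow> i \<le> i0" unfolding i0_def using \<open>finite S\<close> by simp
  have dist: "\<And>k k'. i0 < k \<Longrightarrow> k < k' \<Longrightarrow> k' \<le> L \<Longrightarrow> x k \<noteq> x k'"
  proof
    fix k k' assume "i0 < k" "k < k'" "k' \<le> L" "x k = x k'"
    then have "k \<in> S" by (auto simp: S_def)
    with maxS \<open>i0 < k\<close> show False by fastforce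
  qed
  obtain j where j: "i0 < j" "j \<le> L" "x i0 = x j" using i0S by (auto simp: S_def i0_def)
  have xs: "\<And>k. k < L \<Longrightarrow> x (Suc k) = r (es ! k)" using xv_Suc[OF ep] by (simp add: x_def L_def)
  have xk: "\<And>k. k < L \<Longrightarrow> x k = s (es ! k)" by (simp add: x_def xv_def L_def)
  define c where "c = take (j - i0) (drop i0 es)"
  have lc: "length c = j - i0" using j by (simp add: c_def L_def)
  have cne: "c \<noteq> []" using lc j by auto
  have cnth: "\<And>m. m < j - i0 \<Longrightarrow> c ! m = es ! (i0 + m)" using j by (simp add: c_def L_def)
  have cyc: "is_cycle E1 s r c"
    unfolding is_cycle_def edge_path_def
  proof (intro conjI allI impI)
    show "c \<noteq> []" using lc j by auto
    show "set c \<subseteq> E1" using ep by (auto simp: c_def edge_path_def dest: in_set_takeD in_set_dropD)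
  next
    fix m assume m: "Suc m < length c"
    have "s (es ! Suc (i0 + m)) = r (es ! (i0 + m))" using ep m lc j unfolding edge_path_def L_def by auto
    then show "s (c ! Suc m) = r (c ! m)" using m lc cnth by simp
  next
    have "hd c = c ! 0" by (rule hd_conv_nth[OF cne])
    then have "s (hd c) = x i0" using cnth[of 0] j xk by simp
    moreover have "last c = c ! (j - i0 - 1)" using lc last_conv_nth[OF cne] by simp
    then have "r (last c) = x j" using cnth[of "j - i0 - 1"] j xs[of "j - 1"] by simp
    ultimately show "s (hd c) = r (last c)" using j by simp
  next
    fix m assume m: "1 \<le> m \<and> m < length c"
    have "i0 + m < L" using m lc j by linarith
    then have "s (c ! m) = x (i0 + m)" using m lc cnth[of m] xk[of "i0 + m"] by simp
    moreover have "i0 + m < j" using m lc by linarith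
    then have "x (i0 + m) \<noteq> x j" using dist[of "i0 + m" j] m j by simp
    moreover have "s (hd c) = x i0" using j cnth[of 0] xk by (simp add: hd_conv_nth[OF cne])
    ultimately show "s (c ! m) \<noteq> s (hd c)" using j by simp
  qed
  then have noex: "\<not> has_exit E1 s c" using ne by (simp add: condition_NE_def)
  have uniq: "\<And>k f. i0 \<le> k \<Longrightarrow> k < j \<Longrightarrow> f \<in> E1 \<Longrightarrow> s f = x k \<Longrightarrow> f = es ! k"
  proof -
    fix k f assume k: "i0 \<le> k" "k < j" and f: "f \<in> E1" "s f = x k"
    have "k - i0 < length c" using k lc by simp
    moreover have "s f = s (c ! (k - i0))" using f k cnth[of "k - i0"] xk j by simp
    ultimately have "f = c ! (k - i0)" using noex f unfolding has_exit_def by blast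
    then show "f = es ! k" using cnth[of "k - i0"] k by simp
  qed
  have jL: "j = L"
  proof (rule ccontr)
    assume "j \<noteq> L"
    then have jl: "j < L" using j by simp
    have "es ! j \<in> E1" using ep jl by (auto simp: edge_path_def L_def)
    moreover have "s (es ! j) = x i0" using xk jl j by simp
    ultimately have "es ! j = es ! i0" using uniq[of i0 "es ! j"] j by simp
    then have "x (Suc j) = x (Suc i0)" using xs jl j by simp
    moreover have "x (Suc i0) \<noteq> x (Suc j)" using dist[of "Suc i0" "Suc j"] j jl by simp
    ultimately show False by simp
  qed
  show ?thesis
    using j jL dist uniq by (intro exI[of _ i0]) (auto simp: x_def L_def)
qed


lemma cyc_compare:
  assumes ep1: "edge_path E1 s r es" and ep2: "edge_path E1 s r fs" and len: "length fs = length es"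
    and z: "xv s r es (length es) = xv s r fs (length fs)"
    and i: "i < length es" "xv s r es i = xv s r es (length es)"
      "\<forall>k f. i \<le> k \<and> k < length es \<and> f \<in> E1 \<and> s f = xv s r es k \<longrightarrow> f = es ! k"
    and i': "i' < length fs" "xv s r fs i' = xv s r fs (length fs)"
      "\<forall>k. i' < k \<and> k < length fs \<longrightarrow> xv s r fs k \<noteq> xv s r fs (length fs)"
    and le: "i' \<le> i"
  shows "i = i' \<and> (\<forall>t. t < length es - i \<longrightarrow> es ! (i + t) = fs ! (i' + t))"
proof -
  define L where "L = length es"
  define x where "x = xv s r es"
  define y where "y = xv s r fs"
  have xk: "\<And>k. k < L \<Longrightarrow> x k = s (es ! k)" by (simp add: x_def xv_def L_def)
  have yk: "\<And>k. k < L \<Longrightarrow> y k = s (fs ! k)" by (simp add: y_def xv_def L_def len)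
  have xs: "\<And>k. k < L \<Longrightarrow> x (Suc k) = r (es ! k)" using xv_Suc[OF ep1] by (simp add: x_def L_def)
  have ys: "\<And>k. k < L \<Longrightarrow> y (Suc k) = r (fs ! k)" using xv_Suc[OF ep2] by (simp add: y_def L_def len)
  have fsE: "\<And>k. k < L \<Longrightarrow> fs ! k \<in> E1" using ep2 len by (auto simp: edge_path_def L_def)
  have agree: "\<forall>t. t < L - i \<longrightarrow> es ! (i + t) = fs ! (i' + t)"
  proof (intro allI impI)
    fix t assume "t < L - i"
    then show "es ! (i + t) = fs ! (i' + t)"
    proof (induction t)
      case 0
      have "s (fs ! i') = x i" using yk[of i'] i' i z le by (simp add: x_def y_def L_def len)
      then have "s (fs ! i') = xv s r es i" by (simp add: x_def)
      moreover have "fs ! i' \<in> E1" using fsE[of i'] i' len by (simp add: L_def)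
      ultimately have "fs ! i' = es ! i" using i(3) i(1) by blast
      then show ?case by simp
    next
      case (Suc t)
      have ih: "es ! (i + t) = fs ! (i' + t)" using Suc by simp
      have "s (fs ! (i' + Suc t)) = y (Suc (i' + t))" using yk[of "i' + Suc t"] Suc le by simp
      also have "\<dots> = r (fs ! (i' + t))" using ys[of "i' + t"] Suc le by simp
      also have "\<dots> = r (es ! (i + t))" using ih by simp
      also have "\<dots> = x (i + Suc t)" using xs[of "i + t"] Suc by simp
      finally have "s (fs ! (i' + Suc t)) = xv s r es (i + Suc t)" by (simp add: x_def)
      moreover have "fs ! (i' + Suc t) \<in> E1" using fsE[of "i' + Suc t"] Suc le by simp
      moreover have "i \<le> i + Suc t" "i + Suc t < length es" using Suc by (auto simp: L_def)
      ultimately have "fs ! (i' + Suc t) = es ! (i + Suc t)" using i(3) by blast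
      then show ?case by simp
    qed
  qed
  have "i = i'"
  proof (rule ccontr)
    assume "i \<noteq> i'"
    then have lt: "i' < i" using le by simp
    define p where "p = L - i"
    have p: "0 < p" "i + p = L" using i by (auto simp: p_def L_def)
    have "y (i' + p) = r (fs ! (i' + (p - 1)))" using ys[of "i' + (p - 1)"] p lt by (simp add: Suc_diff_Suc)
    also have "\<dots> = r (es ! (i + (p - 1)))"
    proof -
      have "p - 1 < L - i" using p by (simp add: p_def)
      then have "es ! (i + (p - 1)) = fs ! (i' + (p - 1))" using agree by blast
      then show ?thesis by simp
    qed
    also have "\<dots> = x L" using xs[of "i + (p - 1)"] p by (simp add: Suc_diff_Suc)
    also have "\<dots> = y L" using z by (simp add: x_def y_def L_def len)
    finally have "y (i' + p) = y L" .
    moreover have "i' < i' + p" "i' + p < L" using p lt by auto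
    ultimately show False using i'(3) by (auto simp: y_def L_def len)
  qed
  then show ?thesis using agree by (simp add: L_def)
qed

lemma NE_last:
  assumes fg: "finite_graph E0 E1 s r" and ne: "condition_NE E1 s r"
    and ep1: "edge_path E1 s r es" and ep2: "edge_path E1 s r fs"
    and len: "length fs = length es" and L: "length es > card E0"
    and rr: "r (last es) = r (last fs)"
  shows "last es = last fs \<and> (\<forall>f\<in>E1. s f = s (last es) \<longrightarrow> f = last es)"
proof -
  have Lf: "length fs > card E0" using L len by simp
  from cyc_data[OF fg ne ep1 L] obtain i where i0: "i < length es \<and> xv s r es i = xv s r es (length es)
     \<and> (\<forall>k. i < k \<and> k < length es \<longrightarrow> xv s r es k \<noteq> xv s r es (length es))
     \<and> (\<forall>k f. i \<le> k \<and> k < length es \<and> f \<in> E1 \<and> s f = xv s r es k \<longrightarrow> f = es ! k)" ..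
  from cyc_data[OF fg ne ep2 Lf] obtain i' where i0': "i' < length fs \<and> xv s r fs i' = xv s r fs (length fs)
     \<and> (\<forall>k. i' < k \<and> k < length fs \<longrightarrow> xv s r fs k \<noteq> xv s r fs (length fs))
     \<and> (\<forall>k f. i' \<le> k \<and> k < length fs \<and> f \<in> E1 \<and> s f = xv s r fs k \<longrightarrow> f = fs ! k)" ..
  note i = i0[THEN conjunct1] i0[THEN conjunct2, THEN conjunct1]
    i0[THEN conjunct2, THEN conjunct2, THEN conjunct1] i0[THEN conjunct2, THEN conjunct2, THEN conjunct2]
  note i' = i0'[THEN conjunct1] i0'[THEN conjunct2, THEN conjunct1]
    i0'[THEN conjunct2, THEN conjunct2, THEN conjunct1] i0'[THEN conjunct2, THEN conjunct2, THEN conjunct2]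
  have z: "xv s r es (length es) = xv s r fs (length fs)" using rr by (simp add: xv_def)
  have "i = i' \<and> (\<forall>t. t < length es - i \<longrightarrow> es ! (i + t) = fs ! (i' + t))"
  proof (cases "i' \<le> i")
    case True
    show ?thesis by (rule cyc_compare[OF ep1 ep2 len z i(1,2,4) i'(1-3) True])
  next
    case False
    have "i' = i \<and> (\<forall>t. t < length fs - i' \<longrightarrow> fs ! (i' + t) = es ! (i + t))"
      by (rule cyc_compare[OF ep2 ep1 len[symmetric] z[symmetric] i'(1,2,4) i(1-3)]) (use False in simp)
    note ab = this
    have a: "i' = i" using ab by (rule conjunct1)
    have b: "\<forall>t. t < length fs - i' \<longrightarrow> fs ! (i' + t) = es ! (i + t)" using ab by (rule conjunct2)
    show ?thesis
    proof (intro conjI allI impI)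
      show "i = i'" using a by simp
      fix t assume "t < length es - i"
      then have "t < length fs - i'" using a len by simp
      then show "es ! (i + t) = fs ! (i' + t)" using b by simp
    qed
  qed
  note ab = this
  have ii: "i = i'" using ab by (rule conjunct1)
  have ag: "\<forall>t. t < length es - i \<longrightarrow> es ! (i + t) = fs ! (i' + t)" using ab by (rule conjunct2)
  have t: "length es - 1 - i < length es - i" using i(1) by linarith
  have t2: "i + (length es - 1 - i) = length es - 1" using i(1) by linarith
  have "es ! (i + (length es - 1 - i)) = fs ! (i' + (length es - 1 - i))" using ag[rule_format, OF t] .
  then have eq: "es ! (length es - 1) = fs ! (length es - 1)" using t2 ii by simp
  have ne1: "es \<noteq> []" and ne2: "fs \<noteq> []" using ep1 ep2 by (auto simp: edge_path_def)
  have "last es = last fs" using eq len ne1 ne2 by (simp add: last_conv_nth)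
  moreover have "\<forall>f\<in>E1. s f = s (last es) \<longrightarrow> f = last es"
  proof (intro ballI impI)
    fix f assume f: "f \<in> E1" "s f = s (last es)"
    have "xv s r es (length es - 1) = s (last es)" using ne1 by (simp add: xv_def last_conv_nth)
    moreover have "i \<le> length es - 1" "length es - 1 < length es" using i(1) by auto
    ultimately have "f = es ! (length es - 1)" using i(4)[rule_format, of "length es - 1" f] f by simp
    then show "f = last es" using ne1 by (simp add: last_conv_nth)
  qed
  ultimately show ?thesis by simp
qed


definition Modl :: "('a, 'm) ring_scheme \<Rightarrow> 'x set \<Rightarrow> ('x \<Rightarrow> 'a) set" where
  "Modl R X = {c. (\<forall>m\<in>X. c m \<in> carrier R) \<and> (\<forall>m. m \<notin> X \<longrightarrow> c m = \<zero>\<^bsub>R\<^esub>)}"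

definition submod :: "('a, 'm) ring_scheme \<Rightarrow> ('a \<Rightarrow> 'a \<Rightarrow> 'a) \<Rightarrow> 'x set \<Rightarrow> ('x \<Rightarrow> 'a) set \<Rightarrow> bool" where
  "submod R mu X N \<longleftrightarrow> N \<subseteq> Modl R X \<and> (\<lambda>_. \<zero>\<^bsub>R\<^esub>) \<in> N
     \<and> (\<forall>c\<in>N. \<forall>d\<in>N. (\<lambda>m. c m \<oplus>\<^bsub>R\<^esub> d m) \<in> N)
     \<and> (\<forall>c\<in>N. (\<lambda>m. \<ominus>\<^bsub>R\<^esub> c m) \<in> N)
     \<and> (\<forall>a\<in>carrier R. \<forall>c\<in>N. (\<lambda>m. mu a (c m)) \<in> N)"

definition mu_ideal :: "('a, 'm) ring_scheme \<Rightarrow> ('a \<Rightarrow> 'a \<Rightarrow> 'a) \<Rightarrow> 'a set \<Rightarrow> bool" where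
  "mu_ideal R mu I \<longleftrightarrow> additive_subgroup I R \<and> (\<forall>a\<in>carrier R. \<forall>x\<in>I. mu a x \<in> I)"

lemma chain_mono:
  assumes "\<And>n. C n \<subseteq> C (Suc n)" "n \<le> n'"
  shows "C n \<subseteq> C n'"
  using lift_Suc_mono_le[of C, OF assms] .

context ring
begin

lemma add_subgroup_intro:
  assumes "H \<subseteq> carrier R" "\<zero> \<in> H" "\<And>x. x \<in> H \<Longrightarrow> \<ominus> x \<in> H" "\<And>x y. x \<in> H \<Longrightarrow> y \<in> H \<Longrightarrow> x \<oplus> y \<in> H"
  shows "additive_subgroup H R"
  unfolding additive_subgroup_def
  by (rule add.subgroupI) (use assms in \<open>auto simp: a_inv_def\<close>)

lemma Modl_carrier: "c \<in> Modl R X \<Longrightarrow> c m \<in> carrier R"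
  by (cases "m \<in> X") (auto simp: Modl_def)

lemma acc_submod:
  assumes fin: "finite X"
    and mu0: "\<And>a. a \<in> carrier R \<Longrightarrow> mu a \<zero> = \<zero>"
    and acc: "\<And>I :: nat \<Rightarrow> 'a set. (\<forall>n. mu_ideal R mu (I n)) \<Longrightarrow> (\<forall>n. I n \<subseteq> I (Suc n)) \<Longrightarrow> (\<exists>N. \<forall>n\<ge>N. I n = I N)"
  shows "\<forall>C :: nat \<Rightarrow> ('x \<Rightarrow> 'a) set. (\<forall>n. submod R mu X (C n)) \<and> (\<forall>n. C n \<subseteq> C (Suc n)) \<longrightarrow> (\<exists>N. \<forall>n\<ge>N. C n = C N)"
  using fin
proof (induction X rule: finite_induct)
  case empty
  show ?case
  proof (intro allI impI)
    fix C :: "nat \<Rightarrow> ('x \<Rightarrow> 'a) set"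
    assume H: "(\<forall>n. submod R mu {} (C n)) \<and> (\<forall>n. C n \<subseteq> C (Suc n))"
    have "\<And>n. C n = {\<lambda>_. \<zero>}"
    proof -
      fix n
      have "C n \<subseteq> Modl R {}" "(\<lambda>_. \<zero>) \<in> C n" using H by (auto simp: submod_def)
      moreover have "Modl R {} = {\<lambda>_. \<zero>}" by (auto simp: Modl_def)
      ultimately show "C n = {\<lambda>_. \<zero>}" by (metis empty_iff subset_singletonD)
    qed
    then show "\<exists>N. \<forall>n\<ge>N. C n = C N" by (intro exI[of _ 0]) simp
  qed
next
  case (insert a X)
  show ?case
  proof (intro allI impI)
    fix C :: "nat \<Rightarrow> ('x \<Rightarrow> 'a) set"
    assume H: "(\<forall>n. submod R mu (insert a X) (C n)) \<and> (\<forall>n. C n \<subseteq> C (Suc n))"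
    have sm: "\<And>n. submod R mu (insert a X) (C n)" and ch: "\<And>n. C n \<subseteq> C (Suc n)" using H by simp_all
    have sub: "\<And>n. C n \<subseteq> Modl R (insert a X)" using sm by (simp add: submod_def)
    have cc: "\<And>n c m. c \<in> C n \<Longrightarrow> c m \<in> carrier R" by (rule Modl_carrier, rule subsetD[OF sub])
    define K where "K n = {c \<in> C n. c a = \<zero>}" for n
    define J where "J n = (\<lambda>c. c a) ` C n" for n
    have "\<exists>N. \<forall>n\<ge>N. K n = K N"
    proof -
      have "\<forall>n. submod R mu X (K n)"
      proof
        fix n
        have s: "submod R mu (insert a X) (C n)" by (rule sm)
        show "submod R mu X (K n)"
          unfolding submod_def
        proof (intro conjI ballI)
          show "K n \<subseteq> Modl R X"
            using sub[of n] insert.hyps(2) by (auto simp: K_def Modl_def)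
          show "(\<lambda>_. \<zero>) \<in> K n" using s by (simp add: K_def submod_def)
        next
          fix c d assume "c \<in> K n" "d \<in> K n"
          then show "(\<lambda>m. c m \<oplus> d m) \<in> K n" using s by (simp add: K_def submod_def)
        next
          fix c assume "c \<in> K n"
          then show "(\<lambda>m. \<ominus> c m) \<in> K n" using s by (simp add: K_def submod_def)
        next
          fix x c assume "x \<in> carrier R" "c \<in> K n"
          then show "(\<lambda>m. mu x (c m)) \<in> K n" using s mu0 by (simp add: K_def submod_def)
        qed
      qed
      moreover have "\<forall>n. K n \<subseteq> K (Suc n)" using ch by (auto simp: K_def)
      ultimately show ?thesis by (rule insert.IH[rule_format, OF conjI])
    qed
    then obtain N1 where N1': "\<forall>n\<ge>N1. K n = K N1" ..
    have N1: "\<And>n. n \<ge> N1 \<Longrightarrow> K n = K N1" by (rule N1'[rule_format])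
    have "\<exists>N. \<forall>n\<ge>N. J n = J N"
    proof (rule acc)
      show "\<forall>n. mu_ideal R mu (J n)"
      proof
        fix n
        have s: "submod R mu (insert a X) (C n)" by (rule sm)
        have add_sg: "additive_subgroup (J n) R"
        proof (rule add_subgroup_intro)
          show "J n \<subseteq> carrier R" using cc by (auto simp: J_def)
          have "(\<lambda>_. \<zero>) \<in> C n" using s by (simp add: submod_def)
          then show "\<zero> \<in> J n" unfolding J_def by (rule rev_image_eqI) simp
        next
          fix x assume "x \<in> J n"
          then obtain c where c: "c \<in> C n" "x = c a" by (auto simp: J_def)
          have "(\<lambda>m. \<ominus> c m) \<in> C n" using s c by (simp add: submod_def)
          then show "\<ominus> x \<in> J n" unfolding J_def by (rule rev_image_eqI) (simp add: c)
        next
          fix x y assume "x \<in> J n" "y \<in> J n"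
          then obtain c d where c: "c \<in> C n" "x = c a" and d: "d \<in> C n" "y = d a" by (auto simp: J_def)
          have "(\<lambda>m. c m \<oplus> d m) \<in> C n" using s c d by (simp add: submod_def)
          then show "x \<oplus> y \<in> J n" unfolding J_def by (rule rev_image_eqI) (simp add: c d)
        qed
        moreover have "\<forall>x\<in>carrier R. \<forall>y\<in>J n. mu x y \<in> J n"
        proof (intro ballI)
          fix x y assume x: "x \<in> carrier R" and "y \<in> J n"
          then obtain c where c: "c \<in> C n" "y = c a" by (auto simp: J_def)
          have "(\<lambda>m. mu x (c m)) \<in> C n" using s c x by (simp add: submod_def)
          then show "mu x y \<in> J n" unfolding J_def by (rule rev_image_eqI) (simp add: c)
        qed
        ultimately show "mu_ideal R mu (J n)" by (simp add: mu_ideal_def)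
      qed
      show "\<forall>n. J n \<subseteq> J (Suc n)" using ch by (auto simp: J_def)
    qed
    then obtain N2 where N2': "\<forall>n\<ge>N2. J n = J N2" ..
    have N2: "\<And>n. n \<ge> N2 \<Longrightarrow> J n = J N2" by (rule N2'[rule_format])
    define N where "N = max N1 N2"
    have "\<forall>n\<ge>N. C n = C N"
    proof (intro allI impI)
      fix n assume n: "n \<ge> N"
      show "C n = C N"
      proof
        show "C N \<subseteq> C n" using chain_mono[of C, OF ch n] .
        show "C n \<subseteq> C N"
        proof
          fix c assume c: "c \<in> C n"
          have "c a \<in> J n" using c by (simp add: J_def)
          moreover have "J n = J N" using N2[of n] N2[of N] n by (simp add: N_def)
          ultimately obtain d where d: "d \<in> C N" "d a = c a" by (auto simp: J_def)
          have dn: "d \<in> C n" by (rule subsetD[OF chain_mono[of C, OF ch n] d(1)])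
          define e where "e = (\<lambda>m. c m \<oplus> (\<ominus> d m))"
          have "(\<lambda>m. \<ominus> d m) \<in> C n" using sm[of n] dn by (simp add: submod_def)
          moreover have "\<forall>c\<in>C n. \<forall>d\<in>C n. (\<lambda>m. c m \<oplus> d m) \<in> C n" using sm[of n] by (simp add: submod_def)
          ultimately have "e \<in> C n" unfolding e_def using c(1) by simp
          note en = this
          have "e a = \<zero>" using d cc[OF c, of a] by (simp add: e_def r_neg)
          then have "e \<in> K n" using en by (simp add: K_def)
          moreover have "K n = K N" using N1[of n] N1[of N] n by (simp add: N_def)
          ultimately have "e \<in> K N" by simp
          then have eN: "e \<in> C N" by (simp add: K_def)
          have "c = (\<lambda>m. e m \<oplus> d m)"
          proof
            fix m
            have "c m \<in> carrier R" "d m \<in> carrier R" by (rule cc[OF c], rule cc[OF dn])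
            then show "c m = e m \<oplus> d m" by (simp add: e_def a_assoc l_neg)
          qed
          moreover have "\<forall>c\<in>C N. \<forall>d\<in>C N. (\<lambda>m. c m \<oplus> d m) \<in> C N" using sm[of N] by (simp add: submod_def)
          then have "(\<lambda>m. e m \<oplus> d m) \<in> C N" using eN d(1) by simp
          ultimately show "c \<in> C N" by simp
        qed
      qed
    qed
    then show "\<exists>N. \<forall>n\<ge>N. C n = C N" by (rule exI)
  qed
qed

end


lemma edge_path_snoc_link:
  assumes "edge_path E1 s r (xs @ [l])" "xs \<noteq> []"
  shows "s l = r (last xs)"
  using assms
proof (induction xs)
  case Nil then show ?case by simp
next
  case (Cons x xs)
  show ?case
  proof (cases "xs = []")
    case True
    then show ?thesis using Cons.prems by (simp add: edge_path_Cons)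
  next
    case False
    have "edge_path E1 s r (xs @ [l])" using Cons.prems(1) by (simp add: edge_path_Cons)
    then show ?thesis using Cons.IH False by simp
  qed
qed

context lpa
begin

lemma M_shorten:
  assumes ne: "condition_NE E1 s r" and ga: "gp a" and gb: "gp b"
    and len: "length (snd a) = length (snd b)" and L: "length (snd a) > card E0"
  shows "M a b = \<zero>\<^bsub>A\<^esub> \<or> (\<exists>a' b'. gp a' \<and> gp b' \<and> length (snd a') = length (snd b')
           \<and> length (snd a') < length (snd a) \<and> M a b = M a' b')"
proof -
  obtain v as where a: "a = (v, as)" by (cases a)
  obtain w bs where b: "b = (w, bs)" by (cases b)
  have asne: "as \<noteq> []" and bsne: "bs \<noteq> []" using L len a b by auto
  have epa: "edge_path E1 s r as" and va: "v = s (hd as)" and v0: "v \<in> E0"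
    using ga a asne by (auto simp: gpath_simp)
  have epb: "edge_path E1 s r bs" and wb: "w = s (hd bs)" and w0: "w \<in> E0"
    using gb b bsne by (auto simp: gpath_simp)
  show ?thesis
  proof (cases "rp r a = rp r b")
    case False
    have "M a b = (Pp a \<otimes>\<^bsub>A\<^esub> vx (rp r a)) \<otimes>\<^bsub>A\<^esub> Gp b"
      using Pp_vx[OF ga gp_rp[OF ga]] by (simp add: M_def)
    also have "\<dots> = Pp a \<otimes>\<^bsub>A\<^esub> (vx (rp r a) \<otimes>\<^bsub>A\<^esub> Gp b)" by (simp add: A.m_assoc)
    also have "\<dots> = \<zero>\<^bsub>A\<^esub>" using vx_Gp[OF gb gp_rp[OF ga]] False by simp
    finally show ?thesis by simp
  next
    case True
    then have rr: "r (last as) = r (last bs)" using a b asne bsne by (simp add: rp_def)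
    have lenab: "length bs = length as" using len a b by simp
    have La: "length as > card E0" using L a by simp
    from NE_last[OF fg ne epa epb lenab La rr]
    have ll: "last as = last bs" and uq: "\<forall>f\<in>E1. s f = s (last as) \<longrightarrow> f = last as" by auto
    define l where "l = last as"
    obtain as' where as': "as = as' @ [l]" using asne by (metis append_butlast_last_id l_def)
    obtain bs' where bs': "bs = bs' @ [l]" using bsne ll by (metis append_butlast_last_id l_def)
    have l: "l \<in> E1" using epa as' by (auto simp: edge_path_def)
    have out: "{f \<in> E1. s f = s l} = {l}" using uq l by (auto simp: l_def)
    have ck: "ed l \<otimes>\<^bsub>A\<^esub> gh l = vx (s l)"
      using relCK[OF sE[OF l]] out by (simp add: A.finsum_insert)
    have ga': "gp (v, as')"
    proof (cases "as' = []")
      case True then show ?thesis using v0 by (simp add: gpath_simp)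
    next
      case False
      then show ?thesis using v0 va as' epa edge_path_appendD[of E1 s r as' "[l]"] by (simp add: gpath_simp)
    qed
    have gb': "gp (w, bs')"
    proof (cases "bs' = []")
      case True then show ?thesis using w0 by (simp add: gpath_simp)
    next
      case False
      then show ?thesis using w0 wb bs' epb edge_path_appendD[of E1 s r bs' "[l]"] by (simp add: gpath_simp)
    qed
    have rpa: "rp r (v, as') = s l"
    proof (cases "as' = []")
      case True then show ?thesis using va as' by (simp add: rp_def)
    next
      case False then show ?thesis using edge_path_snoc_link[of E1 s r as' l] epa as' by (simp add: rp_def)
    qed
    have "M a b = vx v \<otimes>\<^bsub>A\<^esub> Es as' \<otimes>\<^bsub>A\<^esub> (ed l \<otimes>\<^bsub>A\<^esub> gh l) \<otimes>\<^bsub>A\<^esub> Gs bs' \<otimes>\<^bsub>A\<^esub> vx w"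
      by (simp add: M_def Pp_def Gp_def a b as' bs' Es_snoc Gs_snoc A.m_assoc)
    also have "\<dots> = (Pp (v, as') \<otimes>\<^bsub>A\<^esub> vx (s l)) \<otimes>\<^bsub>A\<^esub> Gp (w, bs')"
      by (simp add: ck Pp_def Gp_def A.m_assoc)
    also have "\<dots> = M (v, as') (w, bs')"
      using Pp_vx[OF ga' sE[OF l]] rpa by (simp add: M_def)
    finally have "M a b = M (v, as') (w, bs')" .
    moreover have "length as' = length bs'" "length as' < length as" using as' bs' lenab by auto
    ultimately show ?thesis using ga' gb' a
      by (intro disjI2 exI[of _ "(v, as')"] exI[of _ "(w, bs')"]) simp
  qed
qed

lemma M_bounded:
  assumes ne: "condition_NE E1 s r"
  shows "gp a \<Longrightarrow> gp b \<Longrightarrow> length (snd a) = length (snd b) \<Longrightarrow>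
    M a b = \<zero>\<^bsub>A\<^esub> \<or> (\<exists>a' b'. gp a' \<and> gp b' \<and> length (snd a') = length (snd b')
           \<and> length (snd a') \<le> card E0 \<and> M a b = M a' b')"
proof (induction "length (snd a)" arbitrary: a b rule: less_induct)
  case less
  show ?case
  proof (cases "length (snd a) \<le> card E0")
    case True
    then show ?thesis using less.prems by (intro disjI2 exI[of _ a] exI[of _ b]) simp
  next
    case False
    from M_shorten[OF ne less.prems] False
    consider (z) "M a b = \<zero>\<^bsub>A\<^esub>" | (s) a' b' where "gp a'" "gp b'" "length (snd a') = length (snd b')"
      "length (snd a') < length (snd a)" "M a b = M a' b'" by force
    then show ?thesis
    proof cases
      case z then show ?thesis by simp
    next
      case s
      from less.hyps[OF s(4) s(1-3)] show ?thesis using s(5) by simp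
    qed
  qed
qed

definition emb :: "'a \<Rightarrow> _" where "emb c = pr (scw R c [])"

lemma emb_carrier[simp]: "c \<in> carrier R \<Longrightarrow> emb c \<in> carrier A"
  by (simp add: emb_def scw_carrier)

lemma pr_scw: "c \<in> carrier R \<Longrightarrow> pr (scw R c u) = emb c \<otimes>\<^bsub>A\<^esub> wd u"
  using scw_split(1)[of c u] by (simp add: emb_def wd_def scw_carrier mon_carrier)

lemma pr_scw2: "c \<in> carrier R \<Longrightarrow> pr (scw R c u) = wd u \<otimes>\<^bsub>A\<^esub> emb c"
  using scw_split(2)[of c u] by (simp add: emb_def wd_def scw_carrier mon_carrier)

lemma emb_wd_comm: "c \<in> carrier R \<Longrightarrow> emb c \<otimes>\<^bsub>A\<^esub> wd u = wd u \<otimes>\<^bsub>A\<^esub> emb c"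
  using pr_scw[of c u] pr_scw2[of c u] by simp

definition mw where "mw p q = (Vx (fst p) # map Ed (snd p)) @ (map Gh (rev (snd q)) @ [Vx (fst q)])"

lemma M_wd: "M p q = wd (mw p q)"
proof -
  have "Pp p = wd (Vx (fst p) # map Ed (snd p))" by (simp add: Pp_def Es_def wd_Cons)
  moreover have "Gp q = wd (map Gh (rev (snd q)) @ [Vx (fst q)])" by (simp add: Gp_def Gs_def wd_append wd_single)
  ultimately have "M p q = wd (Vx (fst p) # map Ed (snd p)) \<otimes>\<^bsub>A\<^esub> wd (map Gh (rev (snd q)) @ [Vx (fst q)])"
    by (simp add: M_def)
  also have "\<dots> = wd (mw p q)" unfolding mw_def by (rule wd_append[symmetric])
  finally show ?thesis .
qed

lemma emb_M_comm: "c \<in> carrier R \<Longrightarrow> emb c \<otimes>\<^bsub>A\<^esub> M p q = M p q \<otimes>\<^bsub>A\<^esub> emb c"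
  by (simp add: M_wd emb_wd_comm)

lemma emb_add: "c \<in> carrier R \<Longrightarrow> d \<in> carrier R \<Longrightarrow> emb (c \<oplus> d) = emb c \<oplus>\<^bsub>A\<^esub> emb d"
  by (simp add: emb_def scw_add[symmetric] scw_carrier)

lemma emb_mult: "c \<in> carrier R \<Longrightarrow> d \<in> carrier R \<Longrightarrow> emb (c \<otimes> d) = emb c \<otimes>\<^bsub>A\<^esub> emb d"
proof -
  assume c: "c \<in> carrier R" and d: "d \<in> carrier R"
  have e: "scw R (c \<otimes> d) [] = scw R c [] \<otimes>\<^bsub>F\<^esub> scw R d []" using scw_mult[OF c d, of "[] :: ('v,'e) lgen list" "[]", symmetric] by simp
  show ?thesis unfolding emb_def e by (rule P.hom_mult) (simp_all add: scw_carrier c d)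
qed

lemma emb_zero: "emb \<zero> = \<zero>\<^bsub>A\<^esub>"
  by (simp add: emb_def scw_zero)

lemma emb_one: "emb \<one> = \<one>\<^bsub>A\<^esub>"
proof -
  have "scw R \<one> [] = \<one>\<^bsub>F\<^esub>" by (rule ext) (simp add: scw_def FA_one)
  then show ?thesis by (simp add: emb_def)
qed

lemma Pp_word: "gp p \<Longrightarrow> wd (path_word p) = Pp p"
proof -
  assume g: "gp p"
  obtain v es where p: "p = (v, es)" by (cases p)
  show ?thesis
  proof (cases "es = []")
    case True then show ?thesis using p by (simp add: path_word_def Pp_def Es_Nil wd_single)
  next
    case False
    have "vx v \<otimes>\<^bsub>A\<^esub> Es es = Es es"
      using vx_Es[of es v] g p False by (auto simp: gpath_simp edge_path_def)
    then show ?thesis using p False by (simp add: path_word_def Pp_def Es_def)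
  qed
qed

lemma Gp_word: "gp p \<Longrightarrow> wd (ghost_word p) = Gp p"
proof -
  assume g: "gp p"
  obtain v es where p: "p = (v, es)" by (cases p)
  show ?thesis
  proof (cases "es = []")
    case True then show ?thesis using p by (simp add: ghost_word_def Gp_def Gs_Nil wd_single)
  next
    case False
    have "Gs es \<otimes>\<^bsub>A\<^esub> vx v = Gs es"
      using Gs_vx[of es v] g p False by (auto simp: gpath_simp edge_path_def)
    then show ?thesis using p False by (simp add: ghost_word_def Gp_def Gs_def)
  qed
qed

end


locale lpa_ne = lpa +
  assumes ne: "condition_NE E1 s r"
begin

definition Fin where
  "Fin = {(p, q). gp p \<and> gp q \<and> length (snd p) = length (snd q) \<and> length (snd p) \<le> card E0}"

lemma Fin_finite: "finite Fin"
proof -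
  define P where "P = E0 \<times> {es. set es \<subseteq> E1 \<and> length es \<le> card E0}"
  have "finite P" unfolding P_def using finE0 finite_lists_length_le[OF finE1] by simp
  moreover have "Fin \<subseteq> P \<times> P"
  proof
    fix m assume "m \<in> Fin"
    then obtain p q where m: "m = (p, q)" "gp p" "gp q" "length (snd p) = length (snd q)" "length (snd p) \<le> card E0"
      by (auto simp: Fin_def)
    have "p \<in> P" using m gp_fst[of p] gp_set[of p] by (cases p) (auto simp: P_def)
    moreover have "q \<in> P" using m gp_fst[of q] gp_set[of q] by (cases q) (auto simp: P_def)
    ultimately show "m \<in> P \<times> P" using m by simp
  qed
  moreover have "finite (P \<times> P)" using \<open>finite P\<close> by simp
  ultimately show ?thesis using finite_subset by blast
qed

definition phi where "phi co = finsum A (\<lambda>m. emb (co m) \<otimes>\<^bsub>A\<^esub> M (fst m) (snd m)) Fin"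
abbreviation "MF \<equiv> Modl R Fin"
definition S where "S = phi ` MF"

lemma MF_carrier: "co \<in> MF \<Longrightarrow> co m \<in> carrier R"
  by (rule Modl_carrier)

lemma phi_carrier: "co \<in> MF \<Longrightarrow> phi co \<in> carrier A"
  unfolding phi_def by (intro A.finsum_closed) (auto simp: MF_carrier)

lemma MF_add: "co \<in> MF \<Longrightarrow> co' \<in> MF \<Longrightarrow> (\<lambda>m. co m \<oplus> co' m) \<in> MF"
  by (auto simp: Modl_def)

lemma MF_zero: "(\<lambda>_. \<zero>) \<in> MF"
  by (auto simp: Modl_def)

lemma MF_lsc: "x \<in> carrier R \<Longrightarrow> co \<in> MF \<Longrightarrow> (\<lambda>m. x \<otimes> co m) \<in> MF"
  by (auto simp: Modl_def)

lemma MF_rsc: "x \<in> carrier R \<Longrightarrow> co \<in> MF \<Longrightarrow> (\<lambda>m. co m \<otimes> x) \<in> MF"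
  by (auto simp: Modl_def)

lemma phi_add: "co \<in> MF \<Longrightarrow> co' \<in> MF \<Longrightarrow> phi (\<lambda>m. co m \<oplus> co' m) = phi co \<oplus>\<^bsub>A\<^esub> phi co'"
proof -
  assume c: "co \<in> MF" and d: "co' \<in> MF"
  have "phi (\<lambda>m. co m \<oplus> co' m) = finsum A (\<lambda>m. emb (co m) \<otimes>\<^bsub>A\<^esub> M (fst m) (snd m) \<oplus>\<^bsub>A\<^esub> emb (co' m) \<otimes>\<^bsub>A\<^esub> M (fst m) (snd m)) Fin"
    unfolding phi_def
    by (rule A.finsum_cong') (auto simp: emb_add MF_carrier[OF c] MF_carrier[OF d] A.l_distr)
  also have "\<dots> = phi co \<oplus>\<^bsub>A\<^esub> phi co'"
    unfolding phi_def by (rule A.finsum_addf) (auto simp: MF_carrier[OF c] MF_carrier[OF d])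
  finally show ?thesis .
qed

lemma phi_zero: "phi (\<lambda>_. \<zero>) = \<zero>\<^bsub>A\<^esub>"
  unfolding phi_def by (rule A.finsum_allzero) (simp add: emb_zero)

lemma phi_lsc: "x \<in> carrier R \<Longrightarrow> co \<in> MF \<Longrightarrow> phi (\<lambda>m. x \<otimes> co m) = emb x \<otimes>\<^bsub>A\<^esub> phi co"
proof -
  assume x: "x \<in> carrier R" and c: "co \<in> MF"
  have "emb x \<otimes>\<^bsub>A\<^esub> phi co = finsum A (\<lambda>m. emb x \<otimes>\<^bsub>A\<^esub> (emb (co m) \<otimes>\<^bsub>A\<^esub> M (fst m) (snd m))) Fin"
    unfolding phi_def by (rule A.finsum_rdistr) (auto simp: Fin_finite x MF_carrier[OF c])
  also have "\<dots> = phi (\<lambda>m. x \<otimes> co m)"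
    unfolding phi_def
    by (rule A.finsum_cong') (auto simp: x MF_carrier[OF c] emb_mult A.m_assoc)
  finally show ?thesis by simp
qed

lemma phi_rsc: "x \<in> carrier R \<Longrightarrow> co \<in> MF \<Longrightarrow> phi (\<lambda>m. co m \<otimes> x) = phi co \<otimes>\<^bsub>A\<^esub> emb x"
proof -
  assume x: "x \<in> carrier R" and c: "co \<in> MF"
  have "phi co \<otimes>\<^bsub>A\<^esub> emb x = finsum A (\<lambda>m. (emb (co m) \<otimes>\<^bsub>A\<^esub> M (fst m) (snd m)) \<otimes>\<^bsub>A\<^esub> emb x) Fin"
    unfolding phi_def by (rule A.finsum_ldistr) (auto simp: Fin_finite x MF_carrier[OF c])
  also have "\<dots> = phi (\<lambda>m. co m \<otimes> x)"
    unfolding phi_def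
  proof (rule A.finsum_cong')
    fix m
    have "(emb (co m) \<otimes>\<^bsub>A\<^esub> M (fst m) (snd m)) \<otimes>\<^bsub>A\<^esub> emb x = emb (co m) \<otimes>\<^bsub>A\<^esub> (M (fst m) (snd m) \<otimes>\<^bsub>A\<^esub> emb x)"
      using x MF_carrier[OF c] by (simp add: A.m_assoc)
    also have "\<dots> = emb (co m) \<otimes>\<^bsub>A\<^esub> (emb x \<otimes>\<^bsub>A\<^esub> M (fst m) (snd m))"
      using x by (simp add: emb_M_comm)
    also have "\<dots> = emb (co m \<otimes> x) \<otimes>\<^bsub>A\<^esub> M (fst m) (snd m)"
      using x MF_carrier[OF c] by (simp add: A.m_assoc emb_mult)
    finally show "(emb (co m) \<otimes>\<^bsub>A\<^esub> M (fst m) (snd m)) \<otimes>\<^bsub>A\<^esub> emb x = emb (co m \<otimes> x) \<otimes>\<^bsub>A\<^esub> M (fst m) (snd m)" .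
  qed (auto simp: x MF_carrier[OF c])
  finally show ?thesis by simp
qed

lemma S_carrier: "S \<subseteq> carrier A"
  by (auto simp: S_def phi_carrier)

lemma S_zero: "\<zero>\<^bsub>A\<^esub> \<in> S"
  unfolding S_def using phi_zero MF_zero by (metis image_eqI)

lemma S_add: "x \<in> S \<Longrightarrow> y \<in> S \<Longrightarrow> x \<oplus>\<^bsub>A\<^esub> y \<in> S"
proof -
  assume "x \<in> S" "y \<in> S"
  then obtain c d where c: "c \<in> MF" "x = phi c" and d: "d \<in> MF" "y = phi d" by (auto simp: S_def)
  then have "x \<oplus>\<^bsub>A\<^esub> y = phi (\<lambda>m. c m \<oplus> d m)" by (simp add: phi_add)
  then show ?thesis using MF_add[OF c(1) d(1)] by (simp add: S_def)
qed

lemma S_finsum: "finite B \<Longrightarrow> (\<And>i. i \<in> B \<Longrightarrow> f i \<in> S) \<Longrightarrow> finsum A f B \<in> S"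
proof (induction B rule: finite_induct)
  case empty then show ?case by (simp add: S_zero)
next
  case (insert b B)
  have "f \<in> insert b B \<rightarrow> carrier A" using insert.prems S_carrier by blast
  then have "finsum A f (insert b B) = f b \<oplus>\<^bsub>A\<^esub> finsum A f B" using insert.hyps by (simp add: A.finsum_insert)
  then show ?case using insert by (simp add: S_add)
qed

lemma S_single:
  assumes c: "c \<in> carrier R" and ga: "gp a" and gb: "gp b" and len: "length (snd a) = length (snd b)"
  shows "emb c \<otimes>\<^bsub>A\<^esub> M a b \<in> S"
proof -
  from M_bounded[OF ne ga gb len]
  consider (z) "M a b = \<zero>\<^bsub>A\<^esub>" | (s) a' b' where "gp a'" "gp b'" "length (snd a') = length (snd b')"
      "length (snd a') \<le> card E0" "M a b = M a' b'" by blast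
  then show ?thesis
  proof cases
    case z then show ?thesis using c S_zero by simp
  next
    case s
    have m: "(a', b') \<in> Fin" using s by (simp add: Fin_def)
    define co where "co m = (if m = (a', b') then c else \<zero>)" for m
    have co: "co \<in> MF" using m c by (auto simp: co_def Modl_def)
    have "phi co = emb (co (a', b')) \<otimes>\<^bsub>A\<^esub> M (fst (a', b')) (snd (a', b'))"
      unfolding phi_def
      by (rule A.finsum_single) (use m Fin_finite c in \<open>auto simp: co_def emb_zero\<close>)
    then have "phi co = emb c \<otimes>\<^bsub>A\<^esub> M a b" using s by (simp add: co_def)
    then show ?thesis using co by (auto simp: S_def)
  qed
qed

lemma M_vx: "v \<in> E0 \<Longrightarrow> M (v, []) (v, []) = vx v"
  using relV[of v v] by (simp add: M_def Pp_def Gp_def Es_Nil Gs_Nil)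

lemma gp_vertex: "v \<in> E0 \<Longrightarrow> gp (v, [])"
  by (simp add: gpath_simp)

lemma S_emb: "c \<in> carrier R \<Longrightarrow> emb c \<in> S"
proof -
  assume c: "c \<in> carrier R"
  have "emb c = emb c \<otimes>\<^bsub>A\<^esub> finsum A (\<lambda>v. vx v) E0" using c by (simp add: relONE[symmetric])
  also have "\<dots> = finsum A (\<lambda>v. emb c \<otimes>\<^bsub>A\<^esub> vx v) E0"
    by (rule A.finsum_rdistr) (auto simp: finE0 c)
  also have "\<dots> \<in> S"
  proof (rule S_finsum[OF finE0])
    fix v assume v: "v \<in> E0"
    show "emb c \<otimes>\<^bsub>A\<^esub> vx v \<in> S" using S_single[OF c gp_vertex[OF v] gp_vertex[OF v]] M_vx[OF v] by simp
  qed
  finally show ?thesis .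
qed

lemma S_one: "\<one>\<^bsub>A\<^esub> \<in> S"
  using S_emb[of \<one>] by (simp add: emb_one)

lemma emb_neg: "c \<in> carrier R \<Longrightarrow> emb (\<ominus> c) = \<ominus>\<^bsub>A\<^esub> emb c"
proof -
  assume c: "c \<in> carrier R"
  have "emb (\<ominus> c) \<oplus>\<^bsub>A\<^esub> emb c = \<zero>\<^bsub>A\<^esub>" using c by (simp add: emb_add[symmetric] l_neg emb_zero)
  then show ?thesis using c by (intro A.minus_equality[symmetric]) auto
qed

lemma S_neg: "x \<in> S \<Longrightarrow> \<ominus>\<^bsub>A\<^esub> x \<in> S"
proof -
  assume "x \<in> S"
  then obtain c where c: "c \<in> MF" "x = phi c" by (auto simp: S_def)
  have "phi (\<lambda>m. (\<ominus> \<one>) \<otimes> c m) = emb (\<ominus> \<one>) \<otimes>\<^bsub>A\<^esub> phi c" by (rule phi_lsc) (simp_all add: c)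
  also have "\<dots> = \<ominus>\<^bsub>A\<^esub> x" using c phi_carrier[OF c(1)] by (simp add: emb_neg emb_one A.l_minus)
  finally show ?thesis using MF_lsc[of "\<ominus> \<one>" c] c by (auto simp: S_def)
qed

lemma prod_term:
  assumes c: "c \<in> carrier R" and d: "d \<in> carrier R" and m: "m \<in> Fin" and m': "m' \<in> Fin"
  shows "(emb c \<otimes>\<^bsub>A\<^esub> M (fst m) (snd m)) \<otimes>\<^bsub>A\<^esub> (emb d \<otimes>\<^bsub>A\<^esub> M (fst m') (snd m')) \<in> S"
proof -
  have "(emb c \<otimes>\<^bsub>A\<^esub> M (fst m) (snd m)) \<otimes>\<^bsub>A\<^esub> (emb d \<otimes>\<^bsub>A\<^esub> M (fst m') (snd m'))
      = emb c \<otimes>\<^bsub>A\<^esub> (M (fst m) (snd m) \<otimes>\<^bsub>A\<^esub> emb d) \<otimes>\<^bsub>A\<^esub> M (fst m') (snd m')"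
    using c d by (simp add: A.m_assoc)
  also have "\<dots> = emb c \<otimes>\<^bsub>A\<^esub> (emb d \<otimes>\<^bsub>A\<^esub> M (fst m) (snd m)) \<otimes>\<^bsub>A\<^esub> M (fst m') (snd m')"
    using d by (simp add: emb_M_comm)
  also have "\<dots> = emb (c \<otimes> d) \<otimes>\<^bsub>A\<^esub> (M (fst m) (snd m) \<otimes>\<^bsub>A\<^esub> M (fst m') (snd m'))"
    using c d by (simp add: A.m_assoc emb_mult)
  finally have eq: "(emb c \<otimes>\<^bsub>A\<^esub> M (fst m) (snd m)) \<otimes>\<^bsub>A\<^esub> (emb d \<otimes>\<^bsub>A\<^esub> M (fst m') (snd m'))
      = emb (c \<otimes> d) \<otimes>\<^bsub>A\<^esub> (M (fst m) (snd m) \<otimes>\<^bsub>A\<^esub> M (fst m') (snd m'))" .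
  have g: "gp (fst m)" "gp (snd m)" "gp (fst m')" "gp (snd m')"
    "length (snd (fst m)) = length (snd (snd m))" "length (snd (fst m')) = length (snd (snd m'))"
    using m m' by (auto simp: Fin_def)
  from M_mult[OF g]
  consider (z) "M (fst m) (snd m) \<otimes>\<^bsub>A\<^esub> M (fst m') (snd m') = \<zero>\<^bsub>A\<^esub>"
    | (s) a' d' where "gp a'" "gp d'" "length (snd a') = length (snd d')"
        "M (fst m) (snd m) \<otimes>\<^bsub>A\<^esub> M (fst m') (snd m') = M a' d'" by blast
  then show ?thesis
  proof cases
    case z then show ?thesis using eq c d S_zero by simp
  next
    case s then show ?thesis using eq S_single[of "c \<otimes> d" a' d'] c d by simp
  qed
qed

lemma S_mult: "x \<in> S \<Longrightarrow> y \<in> S \<Longrightarrow> x \<otimes>\<^bsub>A\<^esub> y \<in> S"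
proof -
  assume "x \<in> S" "y \<in> S"
  then obtain c d where c: "c \<in> MF" "x = phi c" and d: "d \<in> MF" "y = phi d" by (auto simp: S_def)
  have "x \<otimes>\<^bsub>A\<^esub> y = finsum A (\<lambda>m. (emb (c m) \<otimes>\<^bsub>A\<^esub> M (fst m) (snd m)) \<otimes>\<^bsub>A\<^esub> phi d) Fin"
    unfolding c(2) d(2) phi_def[of c] using phi_carrier[OF d(1)]
    by (intro A.finsum_ldistr) (auto simp: Fin_finite MF_carrier[OF c(1)])
  also have "\<dots> \<in> S"
  proof (rule S_finsum[OF Fin_finite])
    fix m assume m: "m \<in> Fin"
    have "(emb (c m) \<otimes>\<^bsub>A\<^esub> M (fst m) (snd m)) \<otimes>\<^bsub>A\<^esub> phi d
        = finsum A (\<lambda>m'. (emb (c m) \<otimes>\<^bsub>A\<^esub> M (fst m) (snd m)) \<otimes>\<^bsub>A\<^esub> (emb (d m') \<otimes>\<^bsub>A\<^esub> M (fst m') (snd m'))) Fin"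
      unfolding phi_def[of d]
      by (intro A.finsum_rdistr) (auto simp: Fin_finite MF_carrier[OF c(1)] MF_carrier[OF d(1)])
    also have "\<dots> \<in> S"
      by (rule S_finsum[OF Fin_finite]) (rule prod_term[OF MF_carrier[OF c(1)] MF_carrier[OF d(1)] m])
    finally show "(emb (c m) \<otimes>\<^bsub>A\<^esub> M (fst m) (snd m)) \<otimes>\<^bsub>A\<^esub> phi d \<in> S" .
  qed
  finally show ?thesis .
qed

lemma S_subring: "subring S A"
  by (rule A.subringI) (auto simp: S_carrier S_one S_neg S_mult S_add)

end


context lpa_ne
begin

lemma LPA0_sub_S: "LPA0_carrier R E0 E1 s r \<subseteq> S"
proof
  fix x assume "x \<in> LPA0_carrier R E0 E1 s r"
  then obtain y where y: "x = pr y" "y \<in> carrier F"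
    and sup: "\<And>w. y w \<noteq> \<zero> \<Longrightarrow> (\<exists>\<alpha> \<beta>. gp \<alpha> \<and> gp \<beta> \<and> length (snd \<alpha>) = length (snd \<beta>) \<and> w = path_word \<alpha> @ ghost_word \<beta>)"
    unfolding LPA0_carrier_def pr_def by blast
  have fin: "finite {u. y u \<noteq> \<zero>}" by (rule FA_carrierD2[OF y(2)])
  have yc: "\<And>u. y u \<in> carrier R" by (rule FA_carrierD[OF y(2)])
  have "pr y = pr (finsum F (\<lambda>u. scw R (y u) u) {u. y u \<noteq> \<zero>})"
    using FA_repr[OF y(2)] by simp
  also have "\<dots> = finsum A (pr \<circ> (\<lambda>u. scw R (y u) u)) {u. y u \<noteq> \<zero>}"
    by (rule P.hom_finsum_gen) (auto simp: fin yc scw_carrier)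
  also have "\<dots> \<in> S"
  proof (rule S_finsum[OF fin])
    fix u assume "u \<in> {u. y u \<noteq> \<zero>}"
    then obtain \<alpha> \<beta> where ab: "gp \<alpha>" "gp \<beta>" "length (snd \<alpha>) = length (snd \<beta>)" "u = path_word \<alpha> @ ghost_word \<beta>"
      using sup by blast
    have "wd u = M \<alpha> \<beta>" using ab by (simp add: wd_append Pp_word Gp_word M_def)
    then have "(pr \<circ> (\<lambda>u. scw R (y u) u)) u = emb (y u) \<otimes>\<^bsub>A\<^esub> M \<alpha> \<beta>" by (simp add: pr_scw yc)
    then show "(pr \<circ> (\<lambda>u. scw R (y u) u)) u \<in> S" using S_single[OF yc ab(1-3)] by simp
  qed
  finally show "x \<in> S" using y(1) by simp
qed

definition pw where "pw m = path_word (fst m) @ ghost_word (snd m)"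

lemma S_sub_LPA0: "S \<subseteq> LPA0_carrier R E0 E1 s r"
proof
  fix x assume "x \<in> S"
  then obtain co where co: "co \<in> MF" "x = phi co" by (auto simp: S_def)
  note coc = MF_carrier[OF co(1)]
  define X where "X = finsum F (\<lambda>m. scw R (co m) (pw m)) Fin"
  have Xc: "X \<in> carrier F" unfolding X_def by (intro F.finsum_closed) (auto simp: coc scw_carrier)
  have "pr X = finsum A (pr \<circ> (\<lambda>m. scw R (co m) (pw m))) Fin"
    unfolding X_def by (rule P.hom_finsum_gen) (auto simp: Fin_finite coc scw_carrier)
  also have "\<dots> = phi co"
    unfolding phi_def
  proof (rule A.finsum_cong')
    fix m assume m: "m \<in> Fin"
    then have "wd (pw m) = M (fst m) (snd m)"
      by (auto simp: Fin_def pw_def wd_append Pp_word Gp_word M_def)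
    then show "(pr \<circ> (\<lambda>m. scw R (co m) (pw m))) m = emb (co m) \<otimes>\<^bsub>A\<^esub> M (fst m) (snd m)"
      by (simp add: pr_scw coc)
  qed (auto simp: coc)
  finally have prX: "pr X = x" using co(2) by simp
  have supp: "\<forall>w. X w \<noteq> \<zero> \<longrightarrow> (\<exists>\<alpha> \<beta>. gp \<alpha> \<and> gp \<beta> \<and> length (snd \<alpha>) = length (snd \<beta>) \<and> w = path_word \<alpha> @ ghost_word \<beta>)"
  proof (intro allI impI)
    fix w assume nz: "X w \<noteq> \<zero>"
    have Xw: "X w = (\<Oplus>m\<in>Fin. scw R (co m) (pw m) w)"
      unfolding X_def by (rule FA_finsum_apply) (auto simp: Fin_finite coc scw_carrier)
    have "\<exists>m\<in>Fin. w = pw m"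
    proof (rule ccontr)
      assume "\<not> ?thesis"
      then have "(\<Oplus>m\<in>Fin. scw R (co m) (pw m) w) = \<zero>"
        by (intro finsum_allzero) (auto simp: scw_def)
      with nz Xw show False by simp
    qed
    then obtain m where m: "m \<in> Fin" "w = pw m" by blast
    then show "\<exists>\<alpha> \<beta>. gp \<alpha> \<and> gp \<beta> \<and> length (snd \<alpha>) = length (snd \<beta>) \<and> w = path_word \<alpha> @ ghost_word \<beta>"
      by (intro exI[of _ "fst m"] exI[of _ "snd m"]) (auto simp: Fin_def pw_def)
  qed
  show "x \<in> LPA0_carrier R E0 E1 s r"
    unfolding LPA0_carrier_def using Xc supp prX[symmetric] by (auto simp: pr_def)
qed

lemma LPA0_eq: "LPA0_carrier R E0 E1 s r = S"
  using LPA0_sub_S S_sub_LPA0 by blast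

lemma LPA0_ring: "ring (LPA0 R E0 E1 s r)"
  unfolding LPA0_def LPA0_eq by (rule A.subring_is_ring[OF S_subring])


lemma L0_simps:
  "carrier (LPA0 R E0 E1 s r) = S"
  "mult (LPA0 R E0 E1 s r) = mult A"
  "add (LPA0 R E0 E1 s r) = add A"
  "zero (LPA0 R E0 E1 s r) = zero A"
  by (simp_all add: LPA0_def LPA0_eq)

lemma chain_to_mod:
  assumes sub: "\<And>n. C n \<subseteq> S"
    and stab: "\<exists>N. \<forall>n\<ge>N. {co \<in> MF. phi co \<in> C n} = {co \<in> MF. phi co \<in> C N}"
  shows "\<exists>N. \<forall>n\<ge>N. C n = C N"
proof -
  have img: "\<And>n. C n = phi ` {co \<in> MF. phi co \<in> C n}"
  proof
    fix n
    show "C n \<subseteq> phi ` {co \<in> MF. phi co \<in> C n}"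
    proof
      fix x assume x: "x \<in> C n"
      then have "x \<in> S" using sub by blast
      then obtain co where "co \<in> MF" "x = phi co" by (auto simp: S_def)
      then show "x \<in> phi ` {co \<in> MF. phi co \<in> C n}" using x by blast
    qed
    show "phi ` {co \<in> MF. phi co \<in> C n} \<subseteq> C n" by blast
  qed
  from stab obtain N where N: "\<forall>n\<ge>N. {co \<in> MF. phi co \<in> C n} = {co \<in> MF. phi co \<in> C N}" ..
  have "\<forall>n\<ge>N. C n = C N"
  proof (intro allI impI)
    fix n assume "n \<ge> N"
    then have "{co \<in> MF. phi co \<in> C n} = {co \<in> MF. phi co \<in> C N}" by (rule N[rule_format])
    then show "C n = C N" using img[of n] img[of N] by simp
  qed
  then show ?thesis by (rule exI)
qed

lemma neg_as_scal: "co \<in> MF \<Longrightarrow> (\<lambda>m. \<ominus> co m) = (\<lambda>m. (\<ominus> \<one>) \<otimes> co m)"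
  by (rule ext) (simp add: MF_carrier l_minus)

lemma neg_as_scal_r: "co \<in> MF \<Longrightarrow> (\<lambda>m. \<ominus> co m) = (\<lambda>m. co m \<otimes> (\<ominus> \<one>))"
  by (rule ext) (simp add: MF_carrier r_minus)

lemma left_noeth:
  assumes RN: "left_noetherian R"
  shows "left_noetherian (LPA0 R E0 E1 s r)"
  unfolding left_noetherian_def
proof (intro conjI allI impI)
  show "ring (LPA0 R E0 E1 s r)" by (rule LPA0_ring)
  fix C :: "nat \<Rightarrow> _"
  assume H: "(\<forall>n. left_ideal (C n) (LPA0 R E0 E1 s r)) \<and> (\<forall>n. C n \<subseteq> C (Suc n))"
  have li: "\<And>n. left_ideal (C n) (LPA0 R E0 E1 s r)" and ch: "\<And>n. C n \<subseteq> C (Suc n)" using H by simp_all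
  have asg: "\<And>n. additive_subgroup (C n) (LPA0 R E0 E1 s r)" using li by (simp add: left_ideal_def)
  have sub: "\<And>n. C n \<subseteq> S" using additive_subgroup.a_subset[OF asg] by (simp add: L0_simps)
  have z: "\<And>n. \<zero>\<^bsub>A\<^esub> \<in> C n" using additive_subgroup.zero_closed[OF asg] by (simp add: L0_simps)
  have ad: "\<And>n x y. x \<in> C n \<Longrightarrow> y \<in> C n \<Longrightarrow> x \<oplus>\<^bsub>A\<^esub> y \<in> C n"
    using additive_subgroup.a_closed[OF asg] by (simp add: L0_simps)
  have ml: "\<And>n a x. a \<in> S \<Longrightarrow> x \<in> C n \<Longrightarrow> a \<otimes>\<^bsub>A\<^esub> x \<in> C n"
    using li by (simp add: left_ideal_def L0_simps)
  define N where "N n = {co \<in> MF. phi co \<in> C n}" for n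
  have "\<forall>n. submod R (\<otimes>) Fin (N n)"
  proof
    fix n
    show "submod R (\<otimes>) Fin (N n)"
      unfolding submod_def
    proof (intro conjI ballI)
      show "N n \<subseteq> MF" by (auto simp: N_def)
      show "(\<lambda>_. \<zero>) \<in> N n" using MF_zero phi_zero z by (simp add: N_def)
    next
      fix c d assume "c \<in> N n" "d \<in> N n"
      then show "(\<lambda>m. c m \<oplus> d m) \<in> N n" using MF_add phi_add ad by (simp add: N_def)
    next
      fix a c assume a: "a \<in> carrier R" and c: "c \<in> N n"
      then show "(\<lambda>m. a \<otimes> c m) \<in> N n" using MF_lsc phi_lsc ml S_emb by (simp add: N_def)
    next
      fix c assume c: "c \<in> N n"
      have "(\<lambda>m. (\<ominus> \<one>) \<otimes> c m) \<in> N n" using c MF_lsc phi_lsc ml S_emb by (simp add: N_def)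
      then show "(\<lambda>m. \<ominus> c m) \<in> N n" using neg_as_scal c by (simp add: N_def)
    qed
  qed
  moreover have "\<forall>n. N n \<subseteq> N (Suc n)" using ch by (auto simp: N_def)
  moreover have accR: "\<And>I :: nat \<Rightarrow> 'a set. (\<forall>n. mu_ideal R (\<otimes>) (I n)) \<Longrightarrow> (\<forall>n. I n \<subseteq> I (Suc n)) \<Longrightarrow> (\<exists>N. \<forall>n\<ge>N. I n = I N)"
    using RN unfolding left_noetherian_def mu_ideal_def left_ideal_def by blast
  ultimately have "\<exists>M. \<forall>n\<ge>M. N n = N M"
    using acc_submod[OF Fin_finite, of "(\<otimes>)", OF _ accR] by (meson r_null)
  then show "\<exists>M. \<forall>n\<ge>M. C n = C M"
    by (intro chain_to_mod sub) (simp add: N_def)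
qed

lemma right_noeth:
  assumes RN: "right_noetherian R"
  shows "right_noetherian (LPA0 R E0 E1 s r)"
  unfolding right_noetherian_def
proof (intro conjI allI impI)
  show "ring (LPA0 R E0 E1 s r)" by (rule LPA0_ring)
  fix C :: "nat \<Rightarrow> _"
  assume H: "(\<forall>n. right_ideal (C n) (LPA0 R E0 E1 s r)) \<and> (\<forall>n. C n \<subseteq> C (Suc n))"
  have li: "\<And>n. right_ideal (C n) (LPA0 R E0 E1 s r)" and ch: "\<And>n. C n \<subseteq> C (Suc n)" using H by simp_all
  have asg: "\<And>n. additive_subgroup (C n) (LPA0 R E0 E1 s r)" using li by (simp add: right_ideal_def)
  have sub: "\<And>n. C n \<subseteq> S" using additive_subgroup.a_subset[OF asg] by (simp add: L0_simps)
  have z: "\<And>n. \<zero>\<^bsub>A\<^esub> \<in> C n" using additive_subgroup.zero_closed[OF asg] by (simp add: L0_simps)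
  have ad: "\<And>n x y. x \<in> C n \<Longrightarrow> y \<in> C n \<Longrightarrow> x \<oplus>\<^bsub>A\<^esub> y \<in> C n"
    using additive_subgroup.a_closed[OF asg] by (simp add: L0_simps)
  have ml: "\<And>n a x. a \<in> S \<Longrightarrow> x \<in> C n \<Longrightarrow> x \<otimes>\<^bsub>A\<^esub> a \<in> C n"
    using li by (simp add: right_ideal_def L0_simps)
  define N where "N n = {co \<in> MF. phi co \<in> C n}" for n
  have "\<forall>n. submod R (\<lambda>a x. x \<otimes> a) Fin (N n)"
  proof
    fix n
    show "submod R (\<lambda>a x. x \<otimes> a) Fin (N n)"
      unfolding submod_def
    proof (intro conjI ballI)
      show "N n \<subseteq> MF" by (auto simp: N_def)
      show "(\<lambda>_. \<zero>) \<in> N n" using MF_zero phi_zero z by (simp add: N_def)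
    next
      fix c d assume "c \<in> N n" "d \<in> N n"
      then show "(\<lambda>m. c m \<oplus> d m) \<in> N n" using MF_add phi_add ad by (simp add: N_def)
    next
      fix a c assume a: "a \<in> carrier R" and c: "c \<in> N n"
      then show "(\<lambda>m. c m \<otimes> a) \<in> N n" using MF_rsc phi_rsc ml S_emb by (simp add: N_def)
    next
      fix c assume c: "c \<in> N n"
      have "(\<lambda>m. c m \<otimes> (\<ominus> \<one>)) \<in> N n" using c MF_rsc phi_rsc ml S_emb by (simp add: N_def)
      then show "(\<lambda>m. \<ominus> c m) \<in> N n" using neg_as_scal_r c by (simp add: N_def)
    qed
  qed
  moreover have "\<forall>n. N n \<subseteq> N (Suc n)" using ch by (auto simp: N_def)
  moreover have accR: "\<And>I :: nat \<Rightarrow> 'a set. (\<forall>n. mu_ideal R (\<lambda>a x. x \<otimes> a) (I n)) \<Longrightarrow> (\<forall>n. I n \<subseteq> I (Suc n)) \<Longrightarrow> (\<exists>N. \<forall>n\<ge>N. I n = I N)"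
    using RN unfolding right_noetherian_def mu_ideal_def right_ideal_def by blast
  ultimately have "\<exists>M. \<forall>n\<ge>M. N n = N M"
    using acc_submod[OF Fin_finite, of "\<lambda>a x. x \<otimes> a", OF _ accR] by (meson l_null)
  then show "\<exists>M. \<forall>n\<ge>M. C n = C M"
    by (intro chain_to_mod sub) (simp add: N_def)
qed

end

theorem corollary4p6:
  fixes R :: "('r, 'm) ring_scheme"
    and E0 :: "'v set" and E1 :: "'e set" and s r :: "'e \<Rightarrow> 'v"
  assumes "finite_graph E0 E1 s r"
    and "condition_NE E1 s r"
  shows "(left_noetherian R \<longrightarrow> left_noetherian (LPA0 R E0 E1 s r))
       \<and> (right_noetherian R \<longrightarrow> right_noetherian (LPA0 R E0 E1 s r))"
proof (intro conjI impI)
  assume RN: "left_noetherian R"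
  then have "ring R" by (simp add: left_noetherian_def)
  then interpret lpa_ne R E0 E1 s r
    using assms by (intro lpa_ne.intro lpa.intro lpa_ne_axioms.intro lpa_axioms.intro) auto
  show "left_noetherian (LPA0 R E0 E1 s r)" by (rule left_noeth[OF RN])
next
  assume RN: "right_noetherian R"
  then have "ring R" by (simp add: right_noetherian_def)
  then interpret lpa_ne R E0 E1 s r
    using assms by (intro lpa_ne.intro lpa.intro lpa_ne_axioms.intro lpa_axioms.intro) auto
  show "right_noetherian (LPA0 R E0 E1 s r)" by (rule right_noeth[OF RN])
qed


end
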